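(* Let $X$ be a BMC with kernel $\mathcal P$ and initial distribution $\nu$. Assume Assumptions (F) and (F3) hold with $\alpha\in(1/\sqrt2,1)$. Then for all $j\in J$ and $f\in F$, the sequence $(M_{n,j}(f),n\in\mathbb N)$ defined by $$M_{n,j}(f)=(2\alpha_j)^{-n}M_{\mathbb G_n}(\mathcal R_j(f))$$ is a martingale with respect to the filtration $\mathcal H_n=\sigma(X_i,i\in\mathbb T_n)$, and it converges a.s. and in $L^2$ to a random variable $M_{\infty,j}(f)$.
   Context: Let $(S,\mathscr S)$ be a measurable space. Let $\mathbb G_0=\{\emptyset\}$, $\mathbb G_k=\{0,1\}^k$ (words of length $k$), $\mathbb T_n=\bigcup_{r=0}^n\mathbb G_r$, $\mathbb T=\bigcup_{r\ge0}\mathbb G_r$. Let $\mathcal P$ be a probability kernel from $S$ to $S^2$ and $\nu$ a probability measure on $S$. For $g:S^3\to\mathbb R$, $\mathcal Pg(x)=\int g(x,y,z)\mathcal P(x,dy,dz)$, and for $h:S^2\to\mathbb C$, $\mathcal Ph(x)=\int h(y,z)\mathcal P(x,dy,dz)$. A BMC with initial distribution $\nu$ and kernel $\mathcal P$ is a process $X=(X_i,i\in\mathbb T)$ with $X_\emptyset\sim\nu$ such that for all $k\ge0$ and bounded measurable $g_i:S^3\to\mathbb R$, $\mathbb E[\prod_{i\in\mathbb G_k}g_i(X_i,X_{i0},X_{i1})\mid\sigma(X_j,j\in\mathbb T_k)]=\prod_{i\in\mathbb G_k}\mathcal Pg_i(X_i)$. Let $\mathcal Q(x,A)=\frac12(\mathcal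 P(x,A\times S)+\mathcal P(x,S\times A))$, $\mathcal Qf(x)=\int f(y)\mathcal Q(x,dy)$, $\mathcal Q^n$ its iterates, extended linearly to complex functions. Notation: $(f\otimes g)(x,y)=f(x)g(y)$, $\langle\mu,f\rangle=\int f\,d\mu$, $M_A(f)=\sum_{i\in A}f(X_i)$. Assumption (F): $F$ is a set of real measurable functions on $S$ such that (i) $F$ is a vector space containing the constants; (ii) $f\in F\Rightarrow f^2\in F$; (iii) $F\subset L^1(\nu)$; (iv) for all $f_0,f_1\in F$ and $x\in S$, $f_0\otimes f_1\in L^1(\mathcal P(x,\cdot))$ and $\mathcal P(f_0\otimes f_1)\in F$. Assumption (F3): there exist a probability measure $\mu$ on $S$ (invariant for $\mathcal Q$) with $F\subset L^1(\mu)$, $\alpha\in(0,1)$, a finite nonempty index set $J$, distinct complex eigenvalues $\alpha_j$, $j\in J$, of $\mathcal Q$ with $|\alpha_j|=\alpha$, nonzero complex projectors $\mathcal R_j$ defined on $\mathbb CF$ (the complex span of $F$), mapping $\mathbb CF$ into itself, $\mathcal R_j$ being the projector on the eigenspace of $\alpha_j$ (so $\mathcal Q\mathcal R_jf=\alpha_j\mathcal R_jf$), with $\mathcal R_j\circ\mathcal R_{j'}=0$ for $j\ne j'$, and a non-increasing sequence $(\beta_n)$ with $0<\beta_n\le1$, $\beta_n\to0$, such that for all $f\in F$ there exists $g\in F$ with, writing $\theta_j=\alpha_j/\alpha$, $|\mathcal Q^nf-\langle\mu,f\rangle-\alpha^n\sum_{j\in J}\theta_j^n\mathcal R_j(f)|\le\beta_n\alpha^ng$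 for all $n$. *)

theory Defs
  imports "HOL-Probability.Probability"
begin

text \<open>Vertices of the binary tree are words over {0,1}, encoded as bool lists
  (False = 0, True = 1). The children of i are i0 = i @ [False], i1 = i @ [True].\<close>

definition Gen :: "nat \<Rightarrow> bool list set" where
  "Gen k = {w. length w = k}"

definition Tn :: "nat \<Rightarrow> bool list set" where
  "Tn n = {w. length w \<le> n}"

definition Pop3 :: "('s \<Rightarrow> ('s \<times> 's) measure) \<Rightarrow> ('s \<Rightarrow> 's \<Rightarrow> 's \<Rightarrow> real) \<Rightarrow> 's \<Rightarrow> real" where
  "Pop3 P g x = (\<integral>yz. g x (fst yz) (snd yz) \<partial>P x)"

definition Ptens :: "('s \<Rightarrow> ('s \<times> 's) measure) \<Rightarrow> ('s \<Rightarrow> real) \<Rightarrow> ('s \<Rightarrow> real) \<Rightarrow> 's \<Rightarrow> real" where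
  "Ptens P f0 f1 x = (\<integral>yz. f0 (fst yz) * f1 (snd yz) \<partial>P x)"

text \<open>The mean kernel Q(x,A) = (P(x,A x S) + P(x,S x A))/2 acting on complex functions
  (Q f(x) = integral f dQ(x,.)); real functions are acted on via the embedding into complex.\<close>
definition Qop :: "('s \<Rightarrow> ('s \<times> 's) measure) \<Rightarrow> ('s \<Rightarrow> complex) \<Rightarrow> 's \<Rightarrow> complex" where
  "Qop P h x = ((\<integral>yz. h (fst yz) \<partial>P x) + (\<integral>yz. h (snd yz) \<partial>P x)) / 2"

definition CF :: "('s \<Rightarrow> real) set \<Rightarrow> ('s \<Rightarrow> complex) set" where
  "CF F = {h. (\<lambda>x. Re (h x)) \<in> F \<and> (\<lambda>x. Im (h x)) \<in> F}"

definition Hfilt :: "'w measure \<Rightarrow> 's measure \<Rightarrow> (bool list \<Rightarrow> 'w \<Rightarrow> 's) \<Rightarrow> nat \<Rightarrow> 'w measure" where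
  "Hfilt Pr M X n = sigma (space Pr) (\<Union>j\<in>Tn n. {X j -` A \<inter> space Pr | A. A \<in> sets M})"

definition BMC :: "'w measure \<Rightarrow> 's measure \<Rightarrow> ('s \<Rightarrow> ('s \<times> 's) measure) \<Rightarrow> 's measure
    \<Rightarrow> (bool list \<Rightarrow> 'w \<Rightarrow> 's) \<Rightarrow> bool" where
  "BMC Pr M P \<nu> X \<longleftrightarrow>
     prob_space Pr \<and>
     P \<in> M \<rightarrow>\<^sub>M prob_algebra (M \<Otimes>\<^sub>M M) \<and>
     prob_space \<nu> \<and> sets \<nu> = sets M \<and>
     (\<forall>i. X i \<in> Pr \<rightarrow>\<^sub>M M) \<and>
     distr Pr M (X []) = \<nu> \<and>
     (\<forall>k (g :: bool list \<Rightarrow> 's \<Rightarrow> 's \<Rightarrow> 's \<Rightarrow> real).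
        (\<forall>i\<in>Gen k. (\<lambda>(x, y, z). g i x y z) \<in> borel_measurable (M \<Otimes>\<^sub>M M \<Otimes>\<^sub>M M) \<and>
                    (\<exists>B. \<forall>x\<in>space M. \<forall>y\<in>space M. \<forall>z\<in>space M. \<bar>g i x y z\<bar> \<le> B)) \<longrightarrow>
        (AE \<omega> in Pr.
           real_cond_exp Pr (Hfilt Pr M X k)
             (\<lambda>\<omega>. \<Prod>i\<in>Gen k. g i (X i \<omega>) (X (i @ [False]) \<omega>) (X (i @ [True]) \<omega>)) \<omega>
           = (\<Prod>i\<in>Gen k. Pop3 P (g i) (X i \<omega>))))"

definition assmF :: "'s measure \<Rightarrow> ('s \<Rightarrow> ('s \<times> 's) measure) \<Rightarrow> 's measure \<Rightarrow> ('s \<Rightarrow> real) set \<Rightarrow> bool" where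
  "assmF M P \<nu> F \<longleftrightarrow>
     F \<subseteq> borel_measurable M \<and>
     (\<forall>c. (\<lambda>_. c) \<in> F) \<and>
     (\<forall>f\<in>F. \<forall>g\<in>F. (\<lambda>x. f x + g x) \<in> F) \<and>
     (\<forall>c. \<forall>f\<in>F. (\<lambda>x. c * f x) \<in> F) \<and>
     (\<forall>f\<in>F. (\<lambda>x. (f x)\<^sup>2) \<in> F) \<and>
     (\<forall>f\<in>F. integrable \<nu> f) \<and>
     (\<forall>f0\<in>F. \<forall>f1\<in>F.
        (\<forall>x\<in>space M. integrable (P x) (\<lambda>yz. f0 (fst yz) * f1 (snd yz))) \<and>
        Ptens P f0 f1 \<in> F)"

text \<open>Assumption (F3) with data mu, alpha, J, the eigenvalues alpha_j (alj), the projectors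
  R_j, and the sequence beta.\<close>
definition assmF3 :: "'s measure \<Rightarrow> ('s \<Rightarrow> ('s \<times> 's) measure) \<Rightarrow> ('s \<Rightarrow> real) set \<Rightarrow>
    's measure \<Rightarrow> real \<Rightarrow> 'j set \<Rightarrow> ('j \<Rightarrow> complex) \<Rightarrow>
    ('j \<Rightarrow> ('s \<Rightarrow> complex) \<Rightarrow> ('s \<Rightarrow> complex)) \<Rightarrow> (nat \<Rightarrow> real) \<Rightarrow> bool" where
  "assmF3 M P F \<mu> \<alpha> J alj R \<beta> \<longleftrightarrow>
     prob_space \<mu> \<and> sets \<mu> = sets M \<and>
     (\<forall>A\<in>sets M. (\<integral>x. (measure (P x) (A \<times> space M) + measure (P x) (space M \<times> A)) / 2 \<partial>\<mu>)
                  = measure \<mu> A) \<and>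
     (\<forall>f\<in>F. integrable \<mu> f) \<and>
     0 < \<alpha> \<and> \<alpha> < 1 \<and>
     finite J \<and> J \<noteq> {} \<and> inj_on alj J \<and> (\<forall>j\<in>J. cmod (alj j) = \<alpha>) \<and>
     (\<forall>j\<in>J.
        (\<forall>h\<in>CF F. R j h \<in> CF F) \<and>
        (\<forall>h1\<in>CF F. \<forall>h2\<in>CF F. \<forall>x\<in>space M. R j (\<lambda>y. h1 y + h2 y) x = R j h1 x + R j h2 x) \<and>
        (\<forall>c. \<forall>h\<in>CF F. \<forall>x\<in>space M. R j (\<lambda>y. c * h y) x = c * R j h x) \<and>
        (\<forall>h\<in>CF F. \<forall>x\<in>space M. R j (R j h) x = R j h x) \<and>
        (\<exists>h\<in>CF F. \<exists>x\<in>space M. R j h x \<noteq> 0) \<and>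
        (\<forall>h\<in>CF F. \<forall>x\<in>space M. Qop P (R j h) x = alj j * R j h x)) \<and>
     (\<forall>j\<in>J. \<forall>j'\<in>J. j \<noteq> j' \<longrightarrow> (\<forall>h\<in>CF F. \<forall>x\<in>space M. R j (R j' h) x = 0)) \<and>
     antimono \<beta> \<and> (\<forall>n. 0 < \<beta> n \<and> \<beta> n \<le> 1) \<and> \<beta> \<longlonglongrightarrow> 0 \<and>
     (\<forall>f\<in>F. \<exists>g\<in>F. \<forall>n. \<forall>x\<in>space M.
        cmod ((Qop P ^^ n) (\<lambda>y. complex_of_real (f y)) x - complex_of_real (integral\<^sup>L \<mu> f)
              - complex_of_real (\<alpha> ^ n) *
                  (\<Sum>j\<in>J. (alj j / complex_of_real \<alpha>) ^ n * R j (\<lambda>y. complex_of_real (f y)) x))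
        \<le> \<beta> n * \<alpha> ^ n * g x)"

definition cmartingale :: "'w measure \<Rightarrow> (nat \<Rightarrow> 'w measure) \<Rightarrow> (nat \<Rightarrow> 'w \<Rightarrow> complex) \<Rightarrow> bool" where
  "cmartingale Pr H Z \<longleftrightarrow>
     (\<forall>n. subalgebra Pr (H n) \<and> sets (H n) \<subseteq> sets (H (Suc n))) \<and>
     (\<forall>n. Z n \<in> borel_measurable (H n) \<and> integrable Pr (Z n)) \<and>
     (\<forall>n. AE \<omega> in Pr. real_cond_exp Pr (H n) (\<lambda>\<omega>. Re (Z (Suc n) \<omega>)) \<omega> = Re (Z n \<omega>)) \<and>
     (\<forall>n. AE \<omega> in Pr. real_cond_exp Pr (H n) (\<lambda>\<omega>. Im (Z (Suc n) \<omega>)) \<omega> = Im (Z n \<omega>))"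

definition conv_as_L2 :: "'w measure \<Rightarrow> (nat \<Rightarrow> 'w \<Rightarrow> complex) \<Rightarrow> ('w \<Rightarrow> complex) \<Rightarrow> bool" where
  "conv_as_L2 Pr Z Zinf \<longleftrightarrow>
     Zinf \<in> borel_measurable Pr \<and>
     integrable Pr (\<lambda>\<omega>. (cmod (Zinf \<omega>))\<^sup>2) \<and>
     (AE \<omega> in Pr. (\<lambda>n. Z n \<omega>) \<longlonglongrightarrow> Zinf \<omega>) \<and>
     (\<forall>n. integrable Pr (\<lambda>\<omega>. (cmod (Z n \<omega> - Zinf \<omega>))\<^sup>2)) \<and>
     (\<lambda>n. \<integral>\<omega>. (cmod (Z n \<omega> - Zinf \<omega>))\<^sup>2 \<partial>Pr) \<longlonglongrightarrow> 0"

definition Mnj :: "(bool list \<Rightarrow> 'w \<Rightarrow> 's) \<Rightarrow> ('j \<Rightarrow> complex) \<Rightarrow>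
    ('j \<Rightarrow> ('s \<Rightarrow> complex) \<Rightarrow> ('s \<Rightarrow> complex)) \<Rightarrow> 'j \<Rightarrow> ('s \<Rightarrow> real) \<Rightarrow> nat \<Rightarrow> 'w \<Rightarrow> complex" where
  "Mnj X alj R j f n \<omega> =
     inverse ((2 * alj j) ^ n) * (\<Sum>i\<in>Gen n. R j (\<lambda>y. complex_of_real (f y)) (X i \<omega>))"

end

theory Submission
  imports Defs
begin


lemma integral_measurable_kernel2:
  fixes f :: "'a \<Rightarrow> 'b \<Rightarrow> real"
  assumes f[measurable]: "(\<lambda>(x, y). f x y) \<in> borel_measurable (M \<Otimes>\<^sub>M N)"
  assumes L[measurable]: "L \<in> measurable M (subprob_algebra N)"
  shows "(\<lambda>x. integral\<^sup>L (L x) (f x)) \<in> borel_measurable M"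
proof -
  note integral_measurable_subprob_algebra[measurable]
  note measurable_distr2[measurable]
  have "(\<lambda>x. integral\<^sup>L (distr (L x) (M \<Otimes>\<^sub>M N) (\<lambda>y. (x, y))) (\<lambda>(x, y). f x y)) \<in> borel_measurable M"
    by measurable
  then show ?thesis
    by (rule measurable_cong[THEN iffD1, rotated])
       (simp add: integral_distr)
qed

lemma Gen_Suc: "Gen (Suc n) = (\<lambda>a. a @ [False]) ` Gen n \<union> (\<lambda>a. a @ [True]) ` Gen n"
proof (intro equalityI subsetI)
  fix w assume "w \<in> Gen (Suc n)"
  then have l: "length w = Suc n" by (simp add: Gen_def)
  then have w: "w = butlast w @ [last w]" by (metis append_butlast_last_id list.size(3) nat.distinct(1))
  have b: "butlast w \<in> Gen n" using l by (simp add: Gen_def)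
  show "w \<in> (\<lambda>a. a @ [False]) ` Gen n \<union> (\<lambda>a. a @ [True]) ` Gen n"
  proof (cases "last w")
    case True
    then have "w = butlast w @ [True]" using w by simp
    then show ?thesis using b by blast
  next
    case False
    then have "w = butlast w @ [False]" using w by simp
    then show ?thesis using b by blast
  qed
qed (auto simp: Gen_def)

lemma finite_Gen: "finite (Gen n)"
proof -
  have "Gen n = {xs. set xs \<subseteq> UNIV \<and> length xs = n}" by (auto simp: Gen_def)
  then show ?thesis using finite_lists_length_eq[of "UNIV::bool set" n] by simp
qed

lemma sum_Gen_Suc: "(\<Sum>i\<in>Gen (Suc n). g i) = (\<Sum>a\<in>Gen n. g (a @ [False]) + g (a @ [True]))"
proof -
  have d: "(\<lambda>a. a @ [False]) ` Gen n \<inter> (\<lambda>a. a @ [True]) ` Gen n = {}" by auto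
  have i1: "inj_on (\<lambda>a. a @ [False]) (Gen n)" by (auto simp: inj_on_def)
  have i2: "inj_on (\<lambda>a. a @ [True]) (Gen n)" by (auto simp: inj_on_def)
  show ?thesis
    unfolding Gen_Suc
    by (subst sum.union_disjoint) (auto simp: finite_Gen d sum.reindex[OF i1] sum.reindex[OF i2] sum.distrib)
qed

lemma Gen_Tn: "a \<in> Gen n \<Longrightarrow> a \<in> Tn n" by (simp add: Gen_def Tn_def)
lemma Gen_Tn_Suc: "a \<in> Gen n \<Longrightarrow> a @ [b] \<in> Tn (Suc n)" by (simp add: Gen_def Tn_def)
lemma Gen_len: "a \<in> Gen (length a)" by (simp add: Gen_def)

definition trunc :: "nat \<Rightarrow> real \<Rightarrow> real" where
  "trunc n t = max (- real n) (min (real n) t)"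

lemma trunc_abs: "\<bar>trunc n t\<bar> \<le> \<bar>t\<bar>" by (auto simp: trunc_def)
lemma trunc_bnd: "\<bar>trunc n t\<bar> \<le> real n" by (auto simp: trunc_def)
lemma trunc_lim: "(\<lambda>n. trunc n t) \<longlonglongrightarrow> t"
proof (rule tendsto_eventually)
  obtain N :: nat where "\<bar>t\<bar> \<le> real N" using real_arch_simple by blast
  then show "\<forall>\<^sub>F n in sequentially. trunc n t = t"
    unfolding eventually_sequentially
    by (intro exI[of _ N]) (auto simp: trunc_def)
qed
lemma trunc_meas[measurable]: "trunc n \<in> borel_measurable borel"
  unfolding trunc_def by measurable

locale bmcF =
  fixes Pr :: "'w measure" and M :: "'s measure" and P :: "'s \<Rightarrow> ('s \<times> 's) measure"
    and \<nu> :: "'s measure" and X :: "bool list \<Rightarrow> 'w \<Rightarrow> 's" and F :: "('s \<Rightarrow> real) set"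
  assumes bmc: "BMC Pr M P \<nu> X" and aF: "assmF M P \<nu> F"
begin

lemma prob: "prob_space Pr" using bmc by (simp add: BMC_def)

sublocale prob_space Pr by (rule prob)

lemma Xm[measurable]: "X i \<in> Pr \<rightarrow>\<^sub>M M" using bmc by (simp add: BMC_def)
lemma Pmeas: "P \<in> M \<rightarrow>\<^sub>M prob_algebra (M \<Otimes>\<^sub>M M)" using bmc by (simp add: BMC_def)
lemma Psub[measurable]: "P \<in> M \<rightarrow>\<^sub>M subprob_algebra (M \<Otimes>\<^sub>M M)"
  using Pmeas by (rule measurable_prob_algebraD)
lemma Pspace: "x \<in> space M \<Longrightarrow> prob_space (P x) \<and> sets (P x) = sets (M \<Otimes>\<^sub>M M)"
  using measurable_space[OF Pmeas] by (auto simp: space_prob_algebra)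
lemma Pprob: "x \<in> space M \<Longrightarrow> prob_space (P x)" using Pspace by blast
lemma Psets: "x \<in> space M \<Longrightarrow> sets (P x) = sets (M \<Otimes>\<^sub>M M)" using Pspace by blast
lemma PspaceE: "x \<in> space M \<Longrightarrow> space (P x) = space M \<times> space M"
proof -
  assume x: "x \<in> space M"
  have "space (P x) = space (M \<Otimes>\<^sub>M M)" using Psets[OF x] by (rule sets_eq_imp_space_eq)
  then show ?thesis by (simp add: space_pair_measure)
qed
lemma Pmeas_iff: "x \<in> space M \<Longrightarrow> f \<in> borel_measurable (P x) \<longleftrightarrow> f \<in> borel_measurable (M \<Otimes>\<^sub>M M)"
  using Psets by (metis measurable_cong_sets)
lemma nu: "distr Pr M (X []) = \<nu>" using bmc by (simp add: BMC_def)
lemma Xspace: "\<omega> \<in> space Pr \<Longrightarrow> X i \<omega> \<in> space M" using measurable_space[OF Xm] by blast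

lemma F_meas: "u \<in> F \<Longrightarrow> u \<in> borel_measurable M" using aF by (auto simp: assmF_def)
lemma F_const: "(\<lambda>_. c) \<in> F" using aF by (auto simp: assmF_def)
lemma F_add: "u \<in> F \<Longrightarrow> w \<in> F \<Longrightarrow> (\<lambda>x. u x + w x) \<in> F" using aF by (auto simp: assmF_def)
lemma F_cmult: "u \<in> F \<Longrightarrow> (\<lambda>x. c * u x) \<in> F" using aF by (auto simp: assmF_def)
lemma F_sq: "u \<in> F \<Longrightarrow> (\<lambda>x. (u x)\<^sup>2) \<in> F" using aF by (auto simp: assmF_def)
lemma F_nu: "u \<in> F \<Longrightarrow> integrable \<nu> u" using aF by (auto simp: assmF_def)
lemma F_Pint: "u \<in> F \<Longrightarrow> w \<in> F \<Longrightarrow> x \<in> space M \<Longrightarrow> integrable (P x) (\<lambda>yz. u (fst yz) * w (snd yz))"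
  using aF by (auto simp: assmF_def)
lemma F_Ptens: "u \<in> F \<Longrightarrow> w \<in> F \<Longrightarrow> Ptens P u w \<in> F"
  using aF by (auto simp: assmF_def)
lemma F_diff: "u \<in> F \<Longrightarrow> w \<in> F \<Longrightarrow> (\<lambda>x. u x - w x) \<in> F"
  using F_add[of u "\<lambda>x. (-1) * w x"] F_cmult[of w "-1"] by simp
lemma F_mult: "u \<in> F \<Longrightarrow> w \<in> F \<Longrightarrow> (\<lambda>x. u x * w x) \<in> F"
proof -
  assume a: "u \<in> F" "w \<in> F"
  have "(\<lambda>x. u x * w x) = (\<lambda>x. (1/4) * ((\<lambda>x. (u x + w x)\<^sup>2) x - (\<lambda>x. (u x - w x)\<^sup>2) x))"
    by (auto simp: power2_eq_square algebra_simps)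
  moreover have "(\<lambda>x. (1/4) * ((\<lambda>x. (u x + w x)\<^sup>2) x - (\<lambda>x. (u x - w x)\<^sup>2) x)) \<in> F"
    by (intro F_cmult F_diff F_sq F_add a)
  ultimately show ?thesis by simp
qed

lemma Pop3_meas:
  assumes "(\<lambda>(x, y, z). g x y z) \<in> borel_measurable (M \<Otimes>\<^sub>M M \<Otimes>\<^sub>M M)"
  shows "Pop3 P g \<in> borel_measurable M"
proof -
  have "(\<lambda>(x, yz). g x (fst yz) (snd yz)) \<in> borel_measurable (M \<Otimes>\<^sub>M (M \<Otimes>\<^sub>M M))"
    using assms by (simp add: split_beta')
  then have "(\<lambda>x. integral\<^sup>L (P x) ((\<lambda>x yz. g x (fst yz) (snd yz)) x)) \<in> borel_measurable M"
    by (intro integral_measurable_kernel2[OF _ Psub]) (simp only: split_beta')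
  then show ?thesis unfolding Pop3_def by simp
qed

end

context bmcF begin

abbreviation "H n \<equiv> Hfilt Pr M X n"
abbreviation "Hgen n \<equiv> (\<Union>j\<in>Tn n. {X j -` A \<inter> space Pr | A. A \<in> sets M})"

lemma sets_H: "sets (H n) = sigma_sets (space Pr) (Hgen n)"
  unfolding Hfilt_def by (rule sets_measure_of) auto
lemma space_H: "space (H n) = space Pr"
  unfolding Hfilt_def by (rule space_measure_of) auto
lemma H_sub_sets: "sets (H n) \<subseteq> sets Pr"
  unfolding sets_H by (rule sets.sigma_sets_subset) (auto intro: measurable_sets[OF Xm])
lemma subalg: "subalgebra Pr (H n)"
  unfolding subalgebra_def using H_sub_sets space_H by auto
lemma H_mono: "n \<le> m \<Longrightarrow> sets (H n) \<subseteq> sets (H m)"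
  unfolding sets_H by (rule sigma_sets_mono') (auto simp: Tn_def, blast intro: order_trans)
lemma X_H: "i \<in> Tn n \<Longrightarrow> X i \<in> H n \<rightarrow>\<^sub>M M"
  by (rule measurableI) (auto simp: space_H Xspace sets_H intro!: sigma_sets.Basic)
lemma H_fms: "finite_measure_subalgebra Pr (H n)"
  by unfold_locales (rule subalg)

lemma comp3:
  assumes "(\<lambda>(x, y, z). g x y z) \<in> borel_measurable (M \<Otimes>\<^sub>M M \<Otimes>\<^sub>M M)"
  shows "(\<lambda>\<omega>. g (X a \<omega>) (X b \<omega>) (X c \<omega>)) \<in> borel_measurable Pr"
proof -
  have "(\<lambda>\<omega>. (X a \<omega>, X b \<omega>, X c \<omega>)) \<in> Pr \<rightarrow>\<^sub>M M \<Otimes>\<^sub>M M \<Otimes>\<^sub>M M" by measurable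
  from measurable_compose[OF this assms] show ?thesis by simp
qed

lemma Pop3_comp:
  assumes "(\<lambda>(x, y, z). g x y z) \<in> borel_measurable (M \<Otimes>\<^sub>M M \<Otimes>\<^sub>M M)"
  shows "(\<lambda>\<omega>. Pop3 P g (X a \<omega>)) \<in> borel_measurable Pr"
  using measurable_compose[OF Xm Pop3_meas[OF assms]] by (simp add: comp_def)

lemma bmc_int:
  fixes g :: "bool list \<Rightarrow> 's \<Rightarrow> 's \<Rightarrow> 's \<Rightarrow> real"
  assumes g: "\<forall>i\<in>Gen k. (\<lambda>(x, y, z). g i x y z) \<in> borel_measurable (M \<Otimes>\<^sub>M M \<Otimes>\<^sub>M M) \<and>
                    (\<exists>B. \<forall>x\<in>space M. \<forall>y\<in>space M. \<forall>z\<in>space M. \<bar>g i x y z\<bar> \<le> B)"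
    and A: "A \<in> sets (H k)"
  shows "(\<integral>\<omega>. indicator A \<omega> * (\<Prod>i\<in>Gen k. g i (X i \<omega>) (X (i @ [False]) \<omega>) (X (i @ [True]) \<omega>)) \<partial>Pr)
       = (\<integral>\<omega>. indicator A \<omega> * (\<Prod>i\<in>Gen k. Pop3 P (g i) (X i \<omega>)) \<partial>Pr)"
proof -
  interpret fms: finite_measure_subalgebra Pr "H k" by (rule H_fms)
  define f where "f = (\<lambda>\<omega>. \<Prod>i\<in>Gen k. g i (X i \<omega>) (X (i @ [False]) \<omega>) (X (i @ [True]) \<omega>))"
  define r where "r = (\<lambda>\<omega>. \<Prod>i\<in>Gen k. Pop3 P (g i) (X i \<omega>))"
  have ae: "AE \<omega> in Pr. real_cond_exp Pr (H k) f \<omega> = r \<omega>"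
    using bmc g unfolding BMC_def f_def r_def by blast
  have fm: "f \<in> borel_measurable Pr"
    unfolding f_def by (intro borel_measurable_prod comp3) (use g in auto)
  have rm: "r \<in> borel_measurable Pr"
    unfolding r_def by (intro borel_measurable_prod Pop3_comp) (use g in auto)
  obtain B where B: "\<forall>i\<in>Gen k. \<forall>x\<in>space M. \<forall>y\<in>space M. \<forall>z\<in>space M. \<bar>g i x y z\<bar> \<le> B i"
    using g by metis
  have "AE \<omega> in Pr. norm (f \<omega>) \<le> (\<Prod>i\<in>Gen k. B i)"
  proof (rule AE_I2)
    fix \<omega> assume "\<omega> \<in> space Pr"
    then have "\<forall>i\<in>Gen k. 0 \<le> \<bar>g i (X i \<omega>) (X (i @ [False]) \<omega>) (X (i @ [True]) \<omega>)\<bar> \<and>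
       \<bar>g i (X i \<omega>) (X (i @ [False]) \<omega>) (X (i @ [True]) \<omega>)\<bar> \<le> B i"
      using B Xspace by auto
    then show "norm (f \<omega>) \<le> (\<Prod>i\<in>Gen k. B i)"
      unfolding f_def real_norm_def abs_prod by (intro prod_mono) auto
  qed
  then have fi: "integrable Pr f" using fm by (rule integrable_const_bound)
  have As: "A \<in> sets Pr" using A H_sub_sets by blast
  have "(\<integral>\<omega>. indicator A \<omega> * f \<omega> \<partial>Pr) = (\<integral>\<omega>. indicator A \<omega> * real_cond_exp Pr (H k) f \<omega> \<partial>Pr)"
    using fms.real_cond_exp_intA[OF fi A] by (simp add: set_lebesgue_integral_def)
  also have "\<dots> = (\<integral>\<omega>. indicator A \<omega> * r \<omega> \<partial>Pr)"
    by (rule integral_cong_AE) (use ae As rm in auto)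
  finally show ?thesis unfolding f_def r_def .
qed

end

context bmcF begin

lemma Pop3_one: "x \<in> space M \<Longrightarrow> Pop3 P (\<lambda>_ _ _. 1) x = 1"
  unfolding Pop3_def using prob_space.prob_space[OF Pprob] by simp

lemma sec3:
  assumes x: "x \<in> space M" and m: "(\<lambda>(x, y, z). \<phi> x y z) \<in> borel_measurable (M \<Otimes>\<^sub>M M \<Otimes>\<^sub>M M)"
  shows "(\<lambda>yz. \<phi> x (fst yz) (snd yz)) \<in> borel_measurable (P x)"
proof -
  have "(\<lambda>yz. (x, fst yz, snd yz)) \<in> M \<Otimes>\<^sub>M M \<rightarrow>\<^sub>M M \<Otimes>\<^sub>M M \<Otimes>\<^sub>M M"
    using x by measurable
  from measurable_compose[OF this m] have "(\<lambda>yz. \<phi> x (fst yz) (snd yz)) \<in> borel_measurable (M \<Otimes>\<^sub>M M)"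
    by (simp add: split_beta')
  then show ?thesis using Pmeas_iff[OF x] by blast
qed

lemma trunc3:
  assumes "(\<lambda>(x, y, z). \<phi> x y z) \<in> borel_measurable N"
  shows "(\<lambda>(x, y, z). trunc n (\<phi> x y z)) \<in> borel_measurable N"
proof -
  have "(\<lambda>(x, y, z). trunc n (\<phi> x y z)) = trunc n \<circ> (\<lambda>(x, y, z). \<phi> x y z)" by (auto simp: fun_eq_iff)
  then show ?thesis using measurable_compose[OF assms trunc_meas] by (simp add: comp_def)
qed

lemma trunc3_bnd: "\<exists>B. \<forall>x\<in>space M. \<forall>y\<in>space M. \<forall>z\<in>space M. \<bar>trunc n (\<phi> x y z)\<bar> \<le> B"
  using trunc_bnd by blast

lemma Pop3_trunc:
  assumes x: "x \<in> space M" and m: "(\<lambda>(x, y, z). \<phi> x y z) \<in> borel_measurable (M \<Otimes>\<^sub>M M \<Otimes>\<^sub>M M)"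
    and i: "integrable (P x) (\<lambda>yz. \<phi> x (fst yz) (snd yz))"
  shows "(\<lambda>n. Pop3 P (\<lambda>x y z. trunc n (\<phi> x y z)) x) \<longlonglongrightarrow> Pop3 P \<phi> x"
    and "\<bar>Pop3 P (\<lambda>x y z. trunc n (\<phi> x y z)) x\<bar> \<le> (\<integral>yz. \<bar>\<phi> x (fst yz) (snd yz)\<bar> \<partial>P x)"
proof -
  interpret Px: prob_space "P x" using Pprob[OF x] .
  have fm: "(\<lambda>yz. \<phi> x (fst yz) (snd yz)) \<in> borel_measurable (P x)" by (rule sec3[OF x m])
  have tm: "(\<lambda>yz. trunc n (\<phi> x (fst yz) (snd yz))) \<in> borel_measurable (P x)" for n
    using measurable_compose[OF fm trunc_meas] by (simp add: comp_def)
  show "(\<lambda>n. Pop3 P (\<lambda>x y z. trunc n (\<phi> x y z)) x) \<longlonglongrightarrow> Pop3 P \<phi> x"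
    unfolding Pop3_def
    by (rule integral_dominated_convergence[where w="\<lambda>yz. \<bar>\<phi> x (fst yz) (snd yz)\<bar>"])
       (use fm tm i trunc_lim trunc_abs in auto)
  have ti: "integrable (P x) (\<lambda>yz. trunc n (\<phi> x (fst yz) (snd yz)))"
    by (rule Px.integrable_const_bound[where B="real n"]) (use tm trunc_bnd in auto)
  have "\<bar>Pop3 P (\<lambda>x y z. trunc n (\<phi> x y z)) x\<bar> \<le> (\<integral>yz. norm (trunc n (\<phi> x (fst yz) (snd yz))) \<partial>P x)"
    unfolding Pop3_def using integral_norm_bound by (metis real_norm_def)
  also have "\<dots> \<le> (\<integral>yz. \<bar>\<phi> x (fst yz) (snd yz)\<bar> \<partial>P x)"
    by (rule integral_mono) (use ti i trunc_abs in auto)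
  finally show "\<bar>Pop3 P (\<lambda>x y z. trunc n (\<phi> x y z)) x\<bar> \<le> (\<integral>yz. \<bar>\<phi> x (fst yz) (snd yz)\<bar> \<partial>P x)" .
qed

lemma bmc1:
  assumes a: "a \<in> Gen k" and A: "A \<in> sets (H k)"
    and m: "(\<lambda>(x, y, z). \<phi> x y z) \<in> borel_measurable (M \<Otimes>\<^sub>M M \<Otimes>\<^sub>M M)"
    and B: "\<exists>B. \<forall>x\<in>space M. \<forall>y\<in>space M. \<forall>z\<in>space M. \<bar>\<phi> x y z\<bar> \<le> B"
  shows "(\<integral>\<omega>. indicator A \<omega> * \<phi> (X a \<omega>) (X (a @ [False]) \<omega>) (X (a @ [True]) \<omega>) \<partial>Pr)
       = (\<integral>\<omega>. indicator A \<omega> * Pop3 P \<phi> (X a \<omega>) \<partial>Pr)"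
proof -
  define g where "g = (\<lambda>i. if i = a then \<phi> else (\<lambda>_ _ _. 1::real))"
  have g: "\<forall>i\<in>Gen k. (\<lambda>(x, y, z). g i x y z) \<in> borel_measurable (M \<Otimes>\<^sub>M M \<Otimes>\<^sub>M M) \<and>
                    (\<exists>B. \<forall>x\<in>space M. \<forall>y\<in>space M. \<forall>z\<in>space M. \<bar>g i x y z\<bar> \<le> B)"
    using m B by (auto simp: g_def)
  note e = bmc_int[OF g A]
  have l: "(\<Prod>i\<in>Gen k. g i (X i \<omega>) (X (i @ [False]) \<omega>) (X (i @ [True]) \<omega>)) = \<phi> (X a \<omega>) (X (a @ [False]) \<omega>) (X (a @ [True]) \<omega>)" for \<omega>
  proof -
    have "(\<Prod>i\<in>Gen k. g i (X i \<omega>) (X (i @ [False]) \<omega>) (X (i @ [True]) \<omega>))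
       = (\<Prod>i\<in>Gen k. if i = a then \<phi> (X i \<omega>) (X (i @ [False]) \<omega>) (X (i @ [True]) \<omega>) else 1)"
      by (rule prod.cong) (auto simp: g_def)
    then show ?thesis using a finite_Gen by simp
  qed
  have r: "\<omega> \<in> space Pr \<Longrightarrow> (\<Prod>i\<in>Gen k. Pop3 P (g i) (X i \<omega>)) = Pop3 P \<phi> (X a \<omega>)" for \<omega>
  proof -
    assume w: "\<omega> \<in> space Pr"
    have "(\<Prod>i\<in>Gen k. Pop3 P (g i) (X i \<omega>)) = (\<Prod>i\<in>Gen k. if i = a then Pop3 P \<phi> (X i \<omega>) else 1)"
      by (rule prod.cong) (auto simp: g_def Pop3_one Xspace[OF w])
    then show ?thesis using a finite_Gen by simp
  qed
  show ?thesis using e unfolding l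
    by (metis (no_types, lifting) Bochner_Integration.integral_cong r)
qed

lemma bmc2:
  assumes a: "a \<in> Gen k" and b: "b \<in> Gen k" and ab: "a \<noteq> b"
    and m: "(\<lambda>(x, y, z). \<phi> x y z) \<in> borel_measurable (M \<Otimes>\<^sub>M M \<Otimes>\<^sub>M M)"
    and B: "\<exists>B. \<forall>x\<in>space M. \<forall>y\<in>space M. \<forall>z\<in>space M. \<bar>\<phi> x y z\<bar> \<le> B"
    and m2: "(\<lambda>(x, y, z). \<psi> x y z) \<in> borel_measurable (M \<Otimes>\<^sub>M M \<Otimes>\<^sub>M M)"
    and B2: "\<exists>B. \<forall>x\<in>space M. \<forall>y\<in>space M. \<forall>z\<in>space M. \<bar>\<psi> x y z\<bar> \<le> B"
  shows "(\<integral>\<omega>. \<phi> (X a \<omega>) (X (a @ [False]) \<omega>) (X (a @ [True]) \<omega>) * \<psi> (X b \<omega>) (X (b @ [False]) \<omega>) (X (b @ [True]) \<omega>) \<partial>Pr)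
       = (\<integral>\<omega>. Pop3 P \<phi> (X a \<omega>) * Pop3 P \<psi> (X b \<omega>) \<partial>Pr)"
proof -
  define g where "g = (\<lambda>i. if i = a then \<phi> else if i = b then \<psi> else (\<lambda>_ _ _. 1::real))"
  have g: "\<forall>i\<in>Gen k. (\<lambda>(x, y, z). g i x y z) \<in> borel_measurable (M \<Otimes>\<^sub>M M \<Otimes>\<^sub>M M) \<and>
                    (\<exists>B. \<forall>x\<in>space M. \<forall>y\<in>space M. \<forall>z\<in>space M. \<bar>g i x y z\<bar> \<le> B)"
    using m B m2 B2 by (auto simp: g_def)
  have A: "space Pr \<in> sets (H k)" using space_H sets.top by metis
  note e = bmc_int[OF g A]
  have l: "(\<Prod>i\<in>Gen k. g i (X i \<omega>) (X (i @ [False]) \<omega>) (X (i @ [True]) \<omega>)) =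
     \<phi> (X a \<omega>) (X (a @ [False]) \<omega>) (X (a @ [True]) \<omega>) * \<psi> (X b \<omega>) (X (b @ [False]) \<omega>) (X (b @ [True]) \<omega>)" for \<omega>
  proof -
    have "(\<Prod>i\<in>Gen k. g i (X i \<omega>) (X (i @ [False]) \<omega>) (X (i @ [True]) \<omega>))
       = (\<Prod>i\<in>Gen k. (if i = a then \<phi> (X i \<omega>) (X (i @ [False]) \<omega>) (X (i @ [True]) \<omega>) else 1) *
                      (if i = b then \<psi> (X i \<omega>) (X (i @ [False]) \<omega>) (X (i @ [True]) \<omega>) else 1))"
      by (rule prod.cong) (use ab in \<open>auto simp: g_def\<close>)
    then show ?thesis using a b finite_Gen by (simp add: prod.distrib)
  qed
  have r: "\<omega> \<in> space Pr \<Longrightarrow> (\<Prod>i\<in>Gen k. Pop3 P (g i) (X i \<omega>)) = Pop3 P \<phi> (X a \<omega>) * Pop3 P \<psi> (X b \<omega>)" for \<omega>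
  proof -
    assume w: "\<omega> \<in> space Pr"
    have "(\<Prod>i\<in>Gen k. Pop3 P (g i) (X i \<omega>)) = (\<Prod>i\<in>Gen k. (if i = a then Pop3 P \<phi> (X i \<omega>) else 1) *
         (if i = b then Pop3 P \<psi> (X i \<omega>) else 1))"
      by (rule prod.cong) (use ab in \<open>auto simp: g_def Pop3_one Xspace[OF w]\<close>)
    then show ?thesis using a b finite_Gen by (simp add: prod.distrib)
  qed
  have "(\<integral>\<omega>. indicator (space Pr) \<omega> * (\<phi> (X a \<omega>) (X (a @ [False]) \<omega>) (X (a @ [True]) \<omega>) * \<psi> (X b \<omega>) (X (b @ [False]) \<omega>) (X (b @ [True]) \<omega>)) \<partial>Pr)
     = (\<integral>\<omega>. indicator (space Pr) \<omega> * (Pop3 P \<phi> (X a \<omega>) * Pop3 P \<psi> (X b \<omega>)) \<partial>Pr)"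
    using e unfolding l by (metis (no_types, lifting) Bochner_Integration.integral_cong r)
  then show ?thesis by (simp cong: Bochner_Integration.integral_cong)
qed

end

context bmcF begin

lemma lim1:
  assumes a: "a \<in> Gen k" and A: "A \<in> sets (H k)"
    and m: "(\<lambda>(x, y, z). \<phi> x y z) \<in> borel_measurable (M \<Otimes>\<^sub>M M \<Otimes>\<^sub>M M)"
    and iP: "\<And>x. x \<in> space M \<Longrightarrow> integrable (P x) (\<lambda>yz. \<phi> x (fst yz) (snd yz))"
    and \<Phi>: "\<And>x. x \<in> space M \<Longrightarrow> (\<integral>yz. \<bar>\<phi> x (fst yz) (snd yz)\<bar> \<partial>P x) \<le> \<Phi> x"
    and \<Phi>i: "integrable Pr (\<lambda>\<omega>. \<Phi> (X a \<omega>))"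
    and \<phi>i: "integrable Pr (\<lambda>\<omega>. \<phi> (X a \<omega>) (X (a @ [False]) \<omega>) (X (a @ [True]) \<omega>))"
  shows "(\<integral>\<omega>. indicator A \<omega> * \<phi> (X a \<omega>) (X (a @ [False]) \<omega>) (X (a @ [True]) \<omega>) \<partial>Pr)
       = (\<integral>\<omega>. indicator A \<omega> * Pop3 P \<phi> (X a \<omega>) \<partial>Pr)"
proof -
  have As: "A \<in> sets Pr" using A H_sub_sets by blast
  define \<phi>n where "\<phi>n n = (\<lambda>x y z. trunc n (\<phi> x y z))" for n
  have eq: "(\<integral>\<omega>. indicator A \<omega> * \<phi>n n (X a \<omega>) (X (a @ [False]) \<omega>) (X (a @ [True]) \<omega>) \<partial>Pr)
       = (\<integral>\<omega>. indicator A \<omega> * Pop3 P (\<phi>n n) (X a \<omega>) \<partial>Pr)" for n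
    unfolding \<phi>n_def by (rule bmc1[OF a A trunc3[OF m] trunc3_bnd])
  have fm: "(\<lambda>\<omega>. \<phi> (X a \<omega>) (X (a @ [False]) \<omega>) (X (a @ [True]) \<omega>)) \<in> borel_measurable Pr"
    using \<phi>i by auto
  have L: "(\<lambda>n. \<integral>\<omega>. indicator A \<omega> * \<phi>n n (X a \<omega>) (X (a @ [False]) \<omega>) (X (a @ [True]) \<omega>) \<partial>Pr)
      \<longlonglongrightarrow> (\<integral>\<omega>. indicator A \<omega> * \<phi> (X a \<omega>) (X (a @ [False]) \<omega>) (X (a @ [True]) \<omega>) \<partial>Pr)"
  proof (rule integral_dominated_convergence[where w="\<lambda>\<omega>. \<bar>\<phi> (X a \<omega>) (X (a @ [False]) \<omega>) (X (a @ [True]) \<omega>)\<bar>"])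
    show "(\<lambda>\<omega>. indicator A \<omega> * \<phi> (X a \<omega>) (X (a @ [False]) \<omega>) (X (a @ [True]) \<omega>)) \<in> borel_measurable Pr"
      using fm As by measurable
    show "(\<lambda>\<omega>. indicator A \<omega> * \<phi>n n (X a \<omega>) (X (a @ [False]) \<omega>) (X (a @ [True]) \<omega>)) \<in> borel_measurable Pr" for n
      unfolding \<phi>n_def using measurable_compose[OF fm trunc_meas] As by (simp add: comp_def)
    show "integrable Pr (\<lambda>\<omega>. \<bar>\<phi> (X a \<omega>) (X (a @ [False]) \<omega>) (X (a @ [True]) \<omega>)\<bar>)" using \<phi>i by auto
    show "AE \<omega> in Pr. (\<lambda>n. indicator A \<omega> * \<phi>n n (X a \<omega>) (X (a @ [False]) \<omega>) (X (a @ [True]) \<omega>))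
        \<longlonglongrightarrow> indicator A \<omega> * \<phi> (X a \<omega>) (X (a @ [False]) \<omega>) (X (a @ [True]) \<omega>)"
      unfolding \<phi>n_def by (intro AE_I2 tendsto_mult tendsto_const trunc_lim)
    show "AE \<omega> in Pr. norm (indicator A \<omega> * \<phi>n n (X a \<omega>) (X (a @ [False]) \<omega>) (X (a @ [True]) \<omega>))
        \<le> \<bar>\<phi> (X a \<omega>) (X (a @ [False]) \<omega>) (X (a @ [True]) \<omega>)\<bar>" for n
      unfolding \<phi>n_def by (intro AE_I2) (auto simp: indicator_def trunc_abs)
  qed
  have R: "(\<lambda>n. \<integral>\<omega>. indicator A \<omega> * Pop3 P (\<phi>n n) (X a \<omega>) \<partial>Pr)
      \<longlonglongrightarrow> (\<integral>\<omega>. indicator A \<omega> * Pop3 P \<phi> (X a \<omega>) \<partial>Pr)"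
  proof (rule integral_dominated_convergence[where w="\<lambda>\<omega>. \<Phi> (X a \<omega>)"])
    show "(\<lambda>\<omega>. indicator A \<omega> * Pop3 P \<phi> (X a \<omega>)) \<in> borel_measurable Pr"
      using Pop3_comp[OF m] As by measurable
    show "(\<lambda>\<omega>. indicator A \<omega> * Pop3 P (\<phi>n n) (X a \<omega>)) \<in> borel_measurable Pr" for n
      using Pop3_comp[OF trunc3[OF m]] As unfolding \<phi>n_def by measurable
    show "integrable Pr (\<lambda>\<omega>. \<Phi> (X a \<omega>))" by (rule \<Phi>i)
    show "AE \<omega> in Pr. (\<lambda>n. indicator A \<omega> * Pop3 P (\<phi>n n) (X a \<omega>)) \<longlonglongrightarrow> indicator A \<omega> * Pop3 P \<phi> (X a \<omega>)"
      unfolding \<phi>n_def by (intro AE_I2 tendsto_mult tendsto_const Pop3_trunc(1)[OF Xspace m iP[OF Xspace]])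
    show "AE \<omega> in Pr. norm (indicator A \<omega> * Pop3 P (\<phi>n n) (X a \<omega>)) \<le> \<Phi> (X a \<omega>)" for n
    proof (intro AE_I2)
      fix \<omega> assume w: "\<omega> \<in> space Pr"
      have "norm (indicator A \<omega> * Pop3 P (\<phi>n n) (X a \<omega>)) \<le> \<bar>Pop3 P (\<phi>n n) (X a \<omega>)\<bar>"
        by (auto simp: indicator_def)
      also have "\<dots> \<le> \<Phi> (X a \<omega>)"
        unfolding \<phi>n_def using Pop3_trunc(2)[OF Xspace[OF w, of a] m iP[OF Xspace[OF w]], of n] \<Phi>[OF Xspace[OF w, of a]]
        by linarith
      finally show "norm (indicator A \<omega> * Pop3 P (\<phi>n n) (X a \<omega>)) \<le> \<Phi> (X a \<omega>)" .
    qed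
  qed
  show ?thesis using LIMSEQ_unique[OF L[unfolded eq] R] .
qed

lemma lim2:
  assumes a: "a \<in> Gen k" and b: "b \<in> Gen k" and ab: "a \<noteq> b"
    and m: "(\<lambda>(x, y, z). \<phi> x y z) \<in> borel_measurable (M \<Otimes>\<^sub>M M \<Otimes>\<^sub>M M)"
    and iP: "\<And>x. x \<in> space M \<Longrightarrow> integrable (P x) (\<lambda>yz. \<phi> x (fst yz) (snd yz))"
    and P0: "\<And>x. x \<in> space M \<Longrightarrow> Pop3 P \<phi> x = 0"
    and \<Phi>: "\<And>x. x \<in> space M \<Longrightarrow> (\<integral>yz. \<bar>\<phi> x (fst yz) (snd yz)\<bar> \<partial>P x) \<le> \<Phi> x"
    and \<Phi>i: "integrable Pr (\<lambda>\<omega>. \<Phi> (X a \<omega>) * \<Phi> (X b \<omega>))"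
    and \<phi>i: "integrable Pr (\<lambda>\<omega>. \<phi> (X a \<omega>) (X (a @ [False]) \<omega>) (X (a @ [True]) \<omega>) * \<phi> (X b \<omega>) (X (b @ [False]) \<omega>) (X (b @ [True]) \<omega>))"
  shows "(\<integral>\<omega>. \<phi> (X a \<omega>) (X (a @ [False]) \<omega>) (X (a @ [True]) \<omega>) * \<phi> (X b \<omega>) (X (b @ [False]) \<omega>) (X (b @ [True]) \<omega>) \<partial>Pr) = 0"
proof -
  define \<phi>n where "\<phi>n n = (\<lambda>x y z. trunc n (\<phi> x y z))" for n
  have eq: "(\<integral>\<omega>. \<phi>n n (X a \<omega>) (X (a @ [False]) \<omega>) (X (a @ [True]) \<omega>) * \<phi>n n (X b \<omega>) (X (b @ [False]) \<omega>) (X (b @ [True]) \<omega>) \<partial>Pr)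
       = (\<integral>\<omega>. Pop3 P (\<phi>n n) (X a \<omega>) * Pop3 P (\<phi>n n) (X b \<omega>) \<partial>Pr)" for n
    unfolding \<phi>n_def by (rule bmc2[OF a b ab trunc3[OF m] trunc3_bnd trunc3[OF m] trunc3_bnd])
  have fma: "(\<lambda>\<omega>. \<phi> (X a \<omega>) (X (a @ [False]) \<omega>) (X (a @ [True]) \<omega>)) \<in> borel_measurable Pr"
    by (rule comp3[OF m])
  have fmb: "(\<lambda>\<omega>. \<phi> (X b \<omega>) (X (b @ [False]) \<omega>) (X (b @ [True]) \<omega>)) \<in> borel_measurable Pr"
    by (rule comp3[OF m])
  have L: "(\<lambda>n. \<integral>\<omega>. \<phi>n n (X a \<omega>) (X (a @ [False]) \<omega>) (X (a @ [True]) \<omega>) * \<phi>n n (X b \<omega>) (X (b @ [False]) \<omega>) (X (b @ [True]) \<omega>) \<partial>Pr)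
      \<longlonglongrightarrow> (\<integral>\<omega>. \<phi> (X a \<omega>) (X (a @ [False]) \<omega>) (X (a @ [True]) \<omega>) * \<phi> (X b \<omega>) (X (b @ [False]) \<omega>) (X (b @ [True]) \<omega>) \<partial>Pr)"
  proof (rule integral_dominated_convergence[where w="\<lambda>\<omega>. \<bar>\<phi> (X a \<omega>) (X (a @ [False]) \<omega>) (X (a @ [True]) \<omega>) * \<phi> (X b \<omega>) (X (b @ [False]) \<omega>) (X (b @ [True]) \<omega>)\<bar>"])
    show "(\<lambda>\<omega>. \<phi> (X a \<omega>) (X (a @ [False]) \<omega>) (X (a @ [True]) \<omega>) * \<phi> (X b \<omega>) (X (b @ [False]) \<omega>) (X (b @ [True]) \<omega>)) \<in> borel_measurable Pr"
      using fma fmb by measurable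
    show "(\<lambda>\<omega>. \<phi>n n (X a \<omega>) (X (a @ [False]) \<omega>) (X (a @ [True]) \<omega>) * \<phi>n n (X b \<omega>) (X (b @ [False]) \<omega>) (X (b @ [True]) \<omega>)) \<in> borel_measurable Pr" for n
      unfolding \<phi>n_def using measurable_compose[OF fma trunc_meas] measurable_compose[OF fmb trunc_meas]
      by (simp add: comp_def)
    show "integrable Pr (\<lambda>\<omega>. \<bar>\<phi> (X a \<omega>) (X (a @ [False]) \<omega>) (X (a @ [True]) \<omega>) * \<phi> (X b \<omega>) (X (b @ [False]) \<omega>) (X (b @ [True]) \<omega>)\<bar>)"
      using \<phi>i by auto
    show "AE \<omega> in Pr. (\<lambda>n. \<phi>n n (X a \<omega>) (X (a @ [False]) \<omega>) (X (a @ [True]) \<omega>) * \<phi>n n (X b \<omega>) (X (b @ [False]) \<omega>) (X (b @ [True]) \<omega>))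
        \<longlonglongrightarrow> \<phi> (X a \<omega>) (X (a @ [False]) \<omega>) (X (a @ [True]) \<omega>) * \<phi> (X b \<omega>) (X (b @ [False]) \<omega>) (X (b @ [True]) \<omega>)"
      unfolding \<phi>n_def by (intro AE_I2 tendsto_mult trunc_lim)
    show "AE \<omega> in Pr. norm (\<phi>n n (X a \<omega>) (X (a @ [False]) \<omega>) (X (a @ [True]) \<omega>) * \<phi>n n (X b \<omega>) (X (b @ [False]) \<omega>) (X (b @ [True]) \<omega>))
        \<le> \<bar>\<phi> (X a \<omega>) (X (a @ [False]) \<omega>) (X (a @ [True]) \<omega>) * \<phi> (X b \<omega>) (X (b @ [False]) \<omega>) (X (b @ [True]) \<omega>)\<bar>" for n
      unfolding \<phi>n_def by (intro AE_I2) (auto simp: abs_mult intro!: mult_mono trunc_abs)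
  qed
  have R: "(\<lambda>n. \<integral>\<omega>. Pop3 P (\<phi>n n) (X a \<omega>) * Pop3 P (\<phi>n n) (X b \<omega>) \<partial>Pr)
      \<longlonglongrightarrow> (\<integral>\<omega>. Pop3 P \<phi> (X a \<omega>) * Pop3 P \<phi> (X b \<omega>) \<partial>Pr)"
  proof (rule integral_dominated_convergence[where w="\<lambda>\<omega>. \<Phi> (X a \<omega>) * \<Phi> (X b \<omega>)"])
    show "(\<lambda>\<omega>. Pop3 P \<phi> (X a \<omega>) * Pop3 P \<phi> (X b \<omega>)) \<in> borel_measurable Pr"
      using Pop3_comp[OF m] by measurable
    show "(\<lambda>\<omega>. Pop3 P (\<phi>n n) (X a \<omega>) * Pop3 P (\<phi>n n) (X b \<omega>)) \<in> borel_measurable Pr" for n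
      using Pop3_comp[OF trunc3[OF m]] unfolding \<phi>n_def by measurable
    show "integrable Pr (\<lambda>\<omega>. \<Phi> (X a \<omega>) * \<Phi> (X b \<omega>))" by (rule \<Phi>i)
    show "AE \<omega> in Pr. (\<lambda>n. Pop3 P (\<phi>n n) (X a \<omega>) * Pop3 P (\<phi>n n) (X b \<omega>)) \<longlonglongrightarrow> Pop3 P \<phi> (X a \<omega>) * Pop3 P \<phi> (X b \<omega>)"
      unfolding \<phi>n_def by (intro AE_I2 tendsto_mult Pop3_trunc(1)[OF Xspace m iP[OF Xspace]])
    show "AE \<omega> in Pr. norm (Pop3 P (\<phi>n n) (X a \<omega>) * Pop3 P (\<phi>n n) (X b \<omega>)) \<le> \<Phi> (X a \<omega>) * \<Phi> (X b \<omega>)" for n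
    proof (intro AE_I2)
      fix \<omega> assume w: "\<omega> \<in> space Pr"
      have 1: "\<bar>Pop3 P (\<phi>n n) (X a \<omega>)\<bar> \<le> \<Phi> (X a \<omega>)"
        unfolding \<phi>n_def using Pop3_trunc(2)[OF Xspace[OF w, of a] m iP[OF Xspace[OF w]], of n] \<Phi>[OF Xspace[OF w, of a]]
        by linarith
      have 2: "\<bar>Pop3 P (\<phi>n n) (X b \<omega>)\<bar> \<le> \<Phi> (X b \<omega>)"
        unfolding \<phi>n_def using Pop3_trunc(2)[OF Xspace[OF w, of b] m iP[OF Xspace[OF w]], of n] \<Phi>[OF Xspace[OF w, of b]]
        by linarith
      show "norm (Pop3 P (\<phi>n n) (X a \<omega>) * Pop3 P (\<phi>n n) (X b \<omega>)) \<le> \<Phi> (X a \<omega>) * \<Phi> (X b \<omega>)"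
        using 1 2 by (auto simp: abs_mult intro!: mult_mono order_trans[OF abs_ge_zero 1])
    qed
  qed
  have "(\<integral>\<omega>. Pop3 P \<phi> (X a \<omega>) * Pop3 P \<phi> (X b \<omega>) \<partial>Pr) = 0"
    by (subst Bochner_Integration.integral_cong[where g="\<lambda>_. 0"]) (auto simp: P0 Xspace)
  then show ?thesis using LIMSEQ_unique[OF L[unfolded eq] R] by simp
qed

end


lemma abs_le_sq1: "\<bar>t\<bar> \<le> t\<^sup>2 + (1::real)"
proof -
  have "0 \<le> (\<bar>t\<bar> - 1)\<^sup>2" by simp
  then have "0 \<le> \<bar>t\<bar> * \<bar>t\<bar> - 2 * \<bar>t\<bar> + 1" by (simp add: power2_eq_square algebra_simps)
  moreover have "\<bar>t\<bar> * \<bar>t\<bar> = t\<^sup>2" by (simp add: power2_eq_square)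
  ultimately show ?thesis using zero_le_power2[of t] by linarith
qed

lemma trunc_le: "0 \<le> t \<Longrightarrow> trunc n t \<le> t"
  by (auto simp: trunc_def)

lemma trunc_mono: "0 \<le> t \<Longrightarrow> mono (\<lambda>n. trunc n t)"
  by (auto simp: mono_def trunc_def)

context bmcF begin

lemma side_meas: "u \<in> F \<Longrightarrow> (\<lambda>(x, y, z). u (if b then z else y)) \<in> borel_measurable (M \<Otimes>\<^sub>M M \<Otimes>\<^sub>M M)"
  using F_meas[of u] by (cases b) (simp_all add: split_beta')

lemma side_Pint: "u \<in> F \<Longrightarrow> x \<in> space M \<Longrightarrow> integrable (P x) (\<lambda>yz. u (if b then snd yz else fst yz))"
  using F_Pint[of u "\<lambda>_. 1" x] F_Pint[of "\<lambda>_. 1" u x] F_const by (cases b) auto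

lemma side_F: "u \<in> F \<Longrightarrow> Pop3 P (\<lambda>x y z. u (if b then z else y)) \<in> F"
proof -
  assume u: "u \<in> F"
  have "Pop3 P (\<lambda>x y z. u (if b then z else y)) = (if b then Ptens P (\<lambda>_. 1) u else Ptens P u (\<lambda>_. 1))"
    by (cases b) (auto simp: Pop3_def Ptens_def fun_eq_iff)
  then show ?thesis using F_Ptens[OF u F_const] F_Ptens[OF F_const u] by simp
qed

lemma X_side: "(if b then X (a @ [True]) \<omega> else X (a @ [False]) \<omega>) = X (a @ [b]) \<omega>"
  by (cases b) auto

lemma IL: "u \<in> F \<Longrightarrow> integrable Pr (\<lambda>\<omega>. u (X i \<omega>))"
proof (induction i arbitrary: u rule: rev_induct)
  case Nil
  then show ?case using F_nu[OF Nil] integrable_distr_eq[OF Xm[of "[]"] F_meas[OF Nil]] nu by simp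
next
  case (snoc b a)
  have IH: "\<And>u. u \<in> F \<Longrightarrow> integrable Pr (\<lambda>\<omega>. u (X a \<omega>))" by (rule snoc.IH)
  have a: "a \<in> Gen (length a)" by (rule Gen_len)
  have A: "space Pr \<in> sets (H (length a))" using space_H sets.top by metis
  define w where "w = (\<lambda>x. (u x)\<^sup>2 + 1)"
  have wF: "w \<in> F" unfolding w_def by (intro F_add F_sq F_const snoc.prems)
  have wpos: "0 \<le> w x" for x unfolding w_def by simp
  define C where "C = (\<integral>\<omega>. Pop3 P (\<lambda>x y z. w (if b then z else y)) (X a \<omega>) \<partial>Pr)"
  have Ci: "integrable Pr (\<lambda>\<omega>. Pop3 P (\<lambda>x y z. w (if b then z else y)) (X a \<omega>))"
    by (rule IH[OF side_F[OF wF]])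
  have wm: "(\<lambda>\<omega>. w (X (a @ [b]) \<omega>)) \<in> borel_measurable Pr" using F_meas[OF wF] by measurable
  have tm: "(\<lambda>\<omega>. trunc n (w (X (a @ [b]) \<omega>))) \<in> borel_measurable Pr" for n
    using measurable_compose[OF wm trunc_meas] by (simp add: comp_def)
  have ti: "integrable Pr (\<lambda>\<omega>. trunc n (w (X (a @ [b]) \<omega>)))" for n
    by (rule integrable_const_bound[where B="real n"]) (use tm trunc_bnd in auto)
  have eqn: "(\<integral>\<omega>. trunc n (w (X (a @ [b]) \<omega>)) \<partial>Pr)
      = (\<integral>\<omega>. Pop3 P (\<lambda>x y z. trunc n (w (if b then z else y))) (X a \<omega>) \<partial>Pr)" for n
  proof -
    have "(\<integral>\<omega>. indicator (space Pr) \<omega> * trunc n (w (if b then X (a @ [True]) \<omega> else X (a @ [False]) \<omega>)) \<partial>Pr)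
      = (\<integral>\<omega>. indicator (space Pr) \<omega> * Pop3 P (\<lambda>x y z. trunc n (w (if b then z else y))) (X a \<omega>) \<partial>Pr)"
      by (rule bmc1[OF a A trunc3[OF side_meas[OF wF]] trunc3_bnd])
    then show ?thesis by (simp add: X_side cong: Bochner_Integration.integral_cong)
  qed
  have le: "(\<integral>\<omega>. trunc n (w (X (a @ [b]) \<omega>)) \<partial>Pr) \<le> C" for n
  proof -
    have "(\<integral>\<omega>. Pop3 P (\<lambda>x y z. trunc n (w (if b then z else y))) (X a \<omega>) \<partial>Pr) \<le> C"
      unfolding C_def
    proof (rule integral_mono[OF _ Ci])
      show "integrable Pr (\<lambda>\<omega>. Pop3 P (\<lambda>x y z. trunc n (w (if b then z else y))) (X a \<omega>))"
      proof (rule integrable_const_bound[where B="real n"])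
        show "AE \<omega> in Pr. norm (Pop3 P (\<lambda>x y z. trunc n (w (if b then z else y))) (X a \<omega>)) \<le> real n"
        proof (rule AE_I2)
          fix \<omega> assume \<omega>: "\<omega> \<in> space Pr"
          interpret Px: prob_space "P (X a \<omega>)" using Pprob[OF Xspace[OF \<omega>]] .
          have "norm (Pop3 P (\<lambda>x y z. trunc n (w (if b then z else y))) (X a \<omega>))
             \<le> (\<integral>yz. norm (trunc n (w (if b then snd yz else fst yz))) \<partial>P (X a \<omega>))"
            unfolding Pop3_def by (rule integral_norm_bound)
          also have "\<dots> \<le> (\<integral>yz. real n \<partial>P (X a \<omega>))"
          proof (rule integral_mono)
            have mm: "(\<lambda>yz. w (if b then snd yz else fst yz)) \<in> borel_measurable (P (X a \<omega>))"
              using sec3[OF Xspace[OF \<omega>] side_meas[OF wF]] by simp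
            show "integrable (P (X a \<omega>)) (\<lambda>yz. norm (trunc n (w (if b then snd yz else fst yz))))"
              by (rule Px.integrable_const_bound[where B="real n"])
                 (use trunc_bnd measurable_compose[OF mm trunc_meas] in \<open>auto simp: comp_def\<close>)
          qed (use trunc_bnd in auto)
          also have "\<dots> = real n" by (simp add: Px.prob_space)
          finally show "norm (Pop3 P (\<lambda>x y z. trunc n (w (if b then z else y))) (X a \<omega>)) \<le> real n"
            by simp
        qed
      qed (use Pop3_comp[OF trunc3[OF side_meas[OF wF]]] in auto)
    next
      fix \<omega> assume \<omega>: "\<omega> \<in> space Pr"
      interpret Px: prob_space "P (X a \<omega>)" using Pprob[OF Xspace[OF \<omega>]] .
      have mm: "(\<lambda>yz. w (if b then snd yz else fst yz)) \<in> borel_measurable (P (X a \<omega>))"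
        using sec3[OF Xspace[OF \<omega>] side_meas[OF wF]] by simp
      show "Pop3 P (\<lambda>x y z. trunc n (w (if b then z else y))) (X a \<omega>) \<le> Pop3 P (\<lambda>x y z. w (if b then z else y)) (X a \<omega>)"
        unfolding Pop3_def
      proof (rule integral_mono)
        show "integrable (P (X a \<omega>)) (\<lambda>yz. w (if b then snd yz else fst yz))"
          by (rule side_Pint[OF wF Xspace[OF \<omega>]])
        show "integrable (P (X a \<omega>)) (\<lambda>yz. trunc n (w (if b then snd yz else fst yz)))"
          by (rule Px.integrable_const_bound[where B="real n"])
             (use trunc_bnd measurable_compose[OF mm trunc_meas] in \<open>auto simp: comp_def\<close>)
      qed (use wpos in \<open>auto intro: trunc_le\<close>)
    qed
    then show ?thesis using eqn by simp
  qed
  have mono_int: "incseq (\<lambda>n. \<integral>\<omega>. trunc n (w (X (a @ [b]) \<omega>)) \<partial>Pr)"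
    unfolding incseq_def
    by (auto intro!: integral_mono ti monoD[OF trunc_mono] wpos)
  have conv: "(\<lambda>n. \<integral>\<omega>. trunc n (w (X (a @ [b]) \<omega>)) \<partial>Pr) \<longlonglongrightarrow> (SUP n. \<integral>\<omega>. trunc n (w (X (a @ [b]) \<omega>)) \<partial>Pr)"
    by (rule LIMSEQ_incseq_SUP[OF _ mono_int]) (use le in \<open>auto intro!: bdd_aboveI\<close>)
  have wi: "integrable Pr (\<lambda>\<omega>. w (X (a @ [b]) \<omega>))"
    by (rule integrable_monotone_convergence[OF ti _ _ conv wm])
       (auto intro!: AE_I2 trunc_mono wpos trunc_lim)
  show ?case
  proof (rule Bochner_Integration.integrable_bound[OF wi])
    show "(\<lambda>\<omega>. u (X (a @ [b]) \<omega>)) \<in> borel_measurable Pr" using F_meas[OF snoc.prems] by measurable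
    show "AE \<omega> in Pr. norm (u (X (a @ [b]) \<omega>)) \<le> norm (w (X (a @ [b]) \<omega>))"
    proof (rule AE_I2)
      fix \<omega>
      have "\<bar>t\<bar> \<le> t\<^sup>2 + 1" for t :: real
        by (rule abs_le_sq1)
      then show "norm (u (X (a @ [b]) \<omega>)) \<le> norm (w (X (a @ [b]) \<omega>))" by (simp add: w_def)
    qed
  qed
qed

end

context bmcF begin

lemma absF: "u \<in> F \<Longrightarrow> \<bar>u x\<bar> \<le> (\<lambda>x. (u x)\<^sup>2 + 1) x" using abs_le_sq1 by simp
lemma wF: "u \<in> F \<Longrightarrow> (\<lambda>x. (u x)\<^sup>2 + 1) \<in> F" by (intro F_add F_sq F_const)

lemma step1:
  assumes u: "u \<in> F" and a: "a \<in> Gen k" and A: "A \<in> sets (H k)"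
  shows "(\<integral>\<omega>. indicator A \<omega> * u (X (a @ [b]) \<omega>) \<partial>Pr)
       = (\<integral>\<omega>. indicator A \<omega> * Pop3 P (\<lambda>x y z. u (if b then z else y)) (X a \<omega>) \<partial>Pr)"
proof -
  define w where "w = (\<lambda>x. (u x)\<^sup>2 + 1)"
  have w: "w \<in> F" unfolding w_def by (rule wF[OF u])
  have "(\<integral>\<omega>. indicator A \<omega> * u (if b then X (a @ [True]) \<omega> else X (a @ [False]) \<omega>) \<partial>Pr)
       = (\<integral>\<omega>. indicator A \<omega> * Pop3 P (\<lambda>x y z. u (if b then z else y)) (X a \<omega>) \<partial>Pr)"
  proof (rule lim1[OF a A side_meas[OF u], where \<Phi>="Pop3 P (\<lambda>x y z. w (if b then z else y))"])
    show "\<And>x. x \<in> space M \<Longrightarrow> integrable (P x) (\<lambda>yz. u (if b then snd yz else fst yz))"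
      by (rule side_Pint[OF u])
    show "integrable Pr (\<lambda>\<omega>. Pop3 P (\<lambda>x y z. w (if b then z else y)) (X a \<omega>))"
      by (rule IL[OF side_F[OF w]])
    show "integrable Pr (\<lambda>\<omega>. u (if b then X (a @ [True]) \<omega> else X (a @ [False]) \<omega>))"
      unfolding X_side by (rule IL[OF u])
    fix x assume x: "x \<in> space M"
    show "(\<integral>yz. \<bar>u (if b then snd yz else fst yz)\<bar> \<partial>P x) \<le> Pop3 P (\<lambda>x y z. w (if b then z else y)) x"
      unfolding Pop3_def
      by (rule integral_mono) (use side_Pint[OF u x] side_Pint[OF w x] absF[OF u] in \<open>auto simp: w_def\<close>)
  qed
  then show ?thesis unfolding X_side .
qed

lemma E1:
  assumes u: "u \<in> F"
  shows "(\<integral>\<omega>. u (X (a @ [b]) \<omega>) \<partial>Pr) = (\<integral>\<omega>. Pop3 P (\<lambda>x y z. u (if b then z else y)) (X a \<omega>) \<partial>Pr)"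
proof -
  have A: "space Pr \<in> sets (H (length a))" using space_H sets.top by metis
  from step1[OF u Gen_len A, of b] show ?thesis by (simp cong: Bochner_Integration.integral_cong)
qed

definition Qr :: "('s \<Rightarrow> real) \<Rightarrow> 's \<Rightarrow> real" where
  "Qr u x = ((\<integral>yz. u (fst yz) \<partial>P x) + (\<integral>yz. u (snd yz) \<partial>P x)) / 2"

lemma Qr_side: "Qr u x = (Pop3 P (\<lambda>x y z. u (if False then z else y)) x + Pop3 P (\<lambda>x y z. u (if True then z else y)) x) / 2"
  by (simp add: Qr_def Pop3_def)

lemma Qr_F: "u \<in> F \<Longrightarrow> Qr u \<in> F"
proof -
  assume u: "u \<in> F"
  have "Qr u = (\<lambda>x. (1/2) * (Ptens P u (\<lambda>_. 1) x + Ptens P (\<lambda>_. 1) u x))"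
    by (auto simp: Qr_def Ptens_def fun_eq_iff)
  moreover have "(\<lambda>x. (1/2) * (Ptens P u (\<lambda>_. 1) x + Ptens P (\<lambda>_. 1) u x)) \<in> F"
    by (intro F_cmult F_add F_Ptens F_const u)
  ultimately show ?thesis by simp
qed

lemma Qrn_F: "u \<in> F \<Longrightarrow> (Qr ^^ n) u \<in> F"
  by (induction n) (auto intro: Qr_F)

lemma Qop_Qr: "Qop P (\<lambda>y. complex_of_real (w y)) = (\<lambda>x. complex_of_real (Qr w x))"
  by (simp add: Qop_def Qr_def fun_eq_iff)

lemma Qopn: "(Qop P ^^ n) (\<lambda>y. complex_of_real (w y)) = (\<lambda>x. complex_of_real ((Qr ^^ n) w x))"
  by (induction n) (simp_all add: Qop_Qr)

lemma SF: "u \<in> F \<Longrightarrow> (\<Sum>i\<in>Gen n. \<integral>\<omega>. u (X i \<omega>) \<partial>Pr) = 2 ^ n * (\<integral>x. (Qr ^^ n) u x \<partial>\<nu>)"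
proof (induction n arbitrary: u)
  case 0
  have "Gen 0 = {[]}" by (auto simp: Gen_def)
  then show ?case using integral_distr[OF Xm[of "[]"] F_meas[OF "0.prems"]] nu by simp
next
  case (Suc n)
  have "(\<Sum>i\<in>Gen (Suc n). \<integral>\<omega>. u (X i \<omega>) \<partial>Pr)
      = (\<Sum>a\<in>Gen n. (\<integral>\<omega>. u (X (a @ [False]) \<omega>) \<partial>Pr) + (\<integral>\<omega>. u (X (a @ [True]) \<omega>) \<partial>Pr))"
    by (rule sum_Gen_Suc)
  also have "\<dots> = (\<Sum>a\<in>Gen n. 2 * (\<integral>\<omega>. Qr u (X a \<omega>) \<partial>Pr))"
  proof (rule sum.cong[OF refl])
    fix a
    have "(\<integral>\<omega>. u (X (a @ [False]) \<omega>) \<partial>Pr) + (\<integral>\<omega>. u (X (a @ [True]) \<omega>) \<partial>Pr)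
      = (\<integral>\<omega>. Pop3 P (\<lambda>x y z. u (if False then z else y)) (X a \<omega>) \<partial>Pr)
       + (\<integral>\<omega>. Pop3 P (\<lambda>x y z. u (if True then z else y)) (X a \<omega>) \<partial>Pr)"
      using E1[OF Suc.prems, of a False] E1[OF Suc.prems, of a True] by simp
    also have "\<dots> = (\<integral>\<omega>. Pop3 P (\<lambda>x y z. u (if False then z else y)) (X a \<omega>)
                       + Pop3 P (\<lambda>x y z. u (if True then z else y)) (X a \<omega>) \<partial>Pr)"
      by (rule Bochner_Integration.integral_add[symmetric]) (intro IL side_F Suc.prems)+
    also have "\<dots> = (\<integral>\<omega>. 2 * Qr u (X a \<omega>) \<partial>Pr)" by (intro Bochner_Integration.integral_cong refl) (simp add: Qr_side)
    also have "\<dots> = 2 * (\<integral>\<omega>. Qr u (X a \<omega>) \<partial>Pr)" by simp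
    finally show "(\<integral>\<omega>. u (X (a @ [False]) \<omega>) \<partial>Pr) + (\<integral>\<omega>. u (X (a @ [True]) \<omega>) \<partial>Pr)
      = 2 * (\<integral>\<omega>. Qr u (X a \<omega>) \<partial>Pr)" .
  qed
  also have "\<dots> = 2 * (\<Sum>a\<in>Gen n. \<integral>\<omega>. Qr u (X a \<omega>) \<partial>Pr)" by (simp add: sum_distrib_left)
  also have "\<dots> = 2 * (2 ^ n * (\<integral>x. (Qr ^^ n) (Qr u) x \<partial>\<nu>))" using Suc.IH[OF Qr_F[OF Suc.prems]] by simp
  also have "\<dots> = 2 ^ Suc n * (\<integral>x. (Qr ^^ Suc n) u x \<partial>\<nu>)" by (simp add: funpow_Suc_right del: funpow.simps)
  finally show ?case .
qed

end


lemma cint: "integrable N (\<lambda>x. Re (g x)) \<Longrightarrow> integrable N (\<lambda>x. Im (g x)) \<Longrightarrow> integrable N (g :: _ \<Rightarrow> complex)"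
proof -
  assume a: "integrable N (\<lambda>x. Re (g x))" "integrable N (\<lambda>x. Im (g x))"
  have "integrable N (\<lambda>x. complex_of_real (Re (g x)) + \<i> * complex_of_real (Im (g x)))"
    using a by (intro Bochner_Integration.integrable_add integrable_mult_right) (auto simp: complex_of_real_integrable_eq)
  then show ?thesis using complex_eq by simp
qed

locale bmain = bmcF Pr M P \<nu> X F
  for Pr :: "'w measure" and M :: "'s measure" and P :: "'s \<Rightarrow> ('s \<times> 's) measure"
    and \<nu> :: "'s measure" and X :: "bool list \<Rightarrow> 'w \<Rightarrow> 's" and F :: "('s \<Rightarrow> real) set" +
  fixes \<mu> :: "'s measure" and \<alpha> :: real and J :: "'j set" and alj :: "'j \<Rightarrow> complex"
    and R :: "'j \<Rightarrow> ('s \<Rightarrow> complex) \<Rightarrow> ('s \<Rightarrow> complex)" and \<beta> :: "nat \<Rightarrow> real"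
    and j :: 'j and f :: "'s \<Rightarrow> real"
  assumes F3: "assmF3 M P F \<mu> \<alpha> J alj R \<beta>"
    and al1: "1 / sqrt 2 < \<alpha>" and al2: "\<alpha> < 1" and jJ: "j \<in> J" and fF: "f \<in> F"
begin

definition "h = R j (\<lambda>y. complex_of_real (f y))"
definition "hr = (\<lambda>x. Re (h x))"
definition "hi = (\<lambda>x. Im (h x))"
definition "c = alj j"

lemma CF_of_real: "u \<in> F \<Longrightarrow> (\<lambda>y. complex_of_real (u y)) \<in> CF F"
  using F_const[of 0] by (simp add: CF_def)

lemma F3j: "(\<forall>h\<in>CF F. R j h \<in> CF F) \<and> (\<forall>h\<in>CF F. \<forall>x\<in>space M. Qop P (R j h) x = alj j * R j h x)"
  using F3 unfolding assmF3_def by (elim conjE) (use jJ in blast)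

lemma hCF: "h \<in> CF F"
  using F3j CF_of_real[OF fF] unfolding h_def by blast
lemma hrF: "hr \<in> F" using hCF by (simp add: CF_def hr_def)
lemma hiF: "hi \<in> F" using hCF by (simp add: CF_def hi_def)
lemma eig: "x \<in> space M \<Longrightarrow> Qop P h x = c * h x"
  using F3j CF_of_real[OF fF] unfolding h_def c_def by blast
lemma cmod_c: "cmod c = \<alpha>" using F3 unfolding assmF3_def c_def by (elim conjE) (use jJ in blast)
lemma al_pos: "0 < \<alpha>" using F3 unfolding assmF3_def by (elim conjE) (use jJ in blast)
lemma c_nz: "c \<noteq> 0" using cmod_c al_pos by auto
lemma h_eq: "h x = complex_of_real (hr x) + \<i> * complex_of_real (hi x)"
  unfolding hr_def hi_def using complex_eq by simp

lemma h_meas: "h \<in> borel_measurable M"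
  using F_meas[OF hrF] F_meas[OF hiF] unfolding hr_def hi_def borel_measurable_complex_iff by simp

lemma hX_int: "integrable Pr (\<lambda>\<omega>. h (X i \<omega>))"
  by (rule cint) (use IL[OF hrF] IL[OF hiF] in \<open>simp_all add: hr_def hi_def\<close>)

lemma Qr_eig:
  assumes x: "x \<in> space M"
  shows "Qr hr x = Re c * hr x - Im c * hi x" "Qr hi x = Im c * hr x + Re c * hi x"
proof -
  have i1: "integrable (P x) (\<lambda>yz. h (fst yz))"
    by (rule cint) (use side_Pint[OF hrF x, of False] side_Pint[OF hiF x, of False] in \<open>simp_all add: hr_def hi_def\<close>)
  have i2: "integrable (P x) (\<lambda>yz. h (snd yz))"
    by (rule cint) (use side_Pint[OF hrF x, of True] side_Pint[OF hiF x, of True] in \<open>simp_all add: hr_def hi_def\<close>)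
  have "Re (Qop P h x) = Qr hr x" "Im (Qop P h x) = Qr hi x"
    unfolding Qop_def Qr_def hr_def hi_def using i1 i2 by simp_all
  then show "Qr hr x = Re c * hr x - Im c * hi x" "Qr hi x = Im c * hr x + Re c * hi x"
    using eig[OF x] by (simp_all add: hr_def hi_def)
qed

end

context bmain begin

lemma int_ind: "A \<in> sets Pr \<Longrightarrow> integrable Pr g \<Longrightarrow> integrable Pr (\<lambda>\<omega>. indicator A \<omega> * (g \<omega> :: real))"
  using integrable_mult_indicator[of A Pr g] by simp

lemma stepA:
  assumes u: "u \<in> F" and A: "A \<in> sets (H n)"
  shows "(\<Sum>i\<in>Gen (Suc n). \<integral>\<omega>. indicator A \<omega> * u (X i \<omega>) \<partial>Pr)
       = 2 * (\<Sum>a\<in>Gen n. \<integral>\<omega>. indicator A \<omega> * Qr u (X a \<omega>) \<partial>Pr)"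
proof -
  have As: "A \<in> sets Pr" using A H_sub_sets by blast
  have "(\<Sum>i\<in>Gen (Suc n). \<integral>\<omega>. indicator A \<omega> * u (X i \<omega>) \<partial>Pr)
      = (\<Sum>a\<in>Gen n. (\<integral>\<omega>. indicator A \<omega> * u (X (a @ [False]) \<omega>) \<partial>Pr) + (\<integral>\<omega>. indicator A \<omega> * u (X (a @ [True]) \<omega>) \<partial>Pr))"
    by (rule sum_Gen_Suc)
  also have "\<dots> = (\<Sum>a\<in>Gen n. 2 * (\<integral>\<omega>. indicator A \<omega> * Qr u (X a \<omega>) \<partial>Pr))"
  proof (rule sum.cong[OF refl])
    fix a assume a: "a \<in> Gen n"
    have "(\<integral>\<omega>. indicator A \<omega> * u (X (a @ [False]) \<omega>) \<partial>Pr) + (\<integral>\<omega>. indicator A \<omega> * u (X (a @ [True]) \<omega>) \<partial>Pr)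
      = (\<integral>\<omega>. indicator A \<omega> * Pop3 P (\<lambda>x y z. u (if False then z else y)) (X a \<omega>) \<partial>Pr)
       + (\<integral>\<omega>. indicator A \<omega> * Pop3 P (\<lambda>x y z. u (if True then z else y)) (X a \<omega>) \<partial>Pr)"
      using step1[OF u a A, of False] step1[OF u a A, of True] by simp
    also have "\<dots> = (\<integral>\<omega>. indicator A \<omega> * Pop3 P (\<lambda>x y z. u (if False then z else y)) (X a \<omega>)
                       + indicator A \<omega> * Pop3 P (\<lambda>x y z. u (if True then z else y)) (X a \<omega>) \<partial>Pr)"
      by (rule Bochner_Integration.integral_add[symmetric]) (intro int_ind As IL side_F u)+
    also have "\<dots> = (\<integral>\<omega>. 2 * (indicator A \<omega> * Qr u (X a \<omega>)) \<partial>Pr)"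
      by (intro Bochner_Integration.integral_cong refl) (simp add: Qr_side algebra_simps)
    also have "\<dots> = 2 * (\<integral>\<omega>. indicator A \<omega> * Qr u (X a \<omega>) \<partial>Pr)" by simp
    finally show "(\<integral>\<omega>. indicator A \<omega> * u (X (a @ [False]) \<omega>) \<partial>Pr) + (\<integral>\<omega>. indicator A \<omega> * u (X (a @ [True]) \<omega>) \<partial>Pr)
      = 2 * (\<integral>\<omega>. indicator A \<omega> * Qr u (X a \<omega>) \<partial>Pr)" .
  qed
  also have "\<dots> = 2 * (\<Sum>a\<in>Gen n. \<integral>\<omega>. indicator A \<omega> * Qr u (X a \<omega>) \<partial>Pr)" by (simp add: sum_distrib_left)
  finally show ?thesis .
qed

definition "Ir A n = (\<Sum>i\<in>Gen n. \<integral>\<omega>. indicator A \<omega> * hr (X i \<omega>) \<partial>Pr)"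
definition "Ii A n = (\<Sum>i\<in>Gen n. \<integral>\<omega>. indicator A \<omega> * hi (X i \<omega>) \<partial>Pr)"

lemma stepRI:
  assumes A: "A \<in> sets (H n)"
  shows "Ir A (Suc n) = 2 * (Re c * Ir A n - Im c * Ii A n)"
    and "Ii A (Suc n) = 2 * (Im c * Ir A n + Re c * Ii A n)"
proof -
  have As: "A \<in> sets Pr" using A H_sub_sets by blast
  have "(\<integral>\<omega>. indicator A \<omega> * Qr hr (X a \<omega>) \<partial>Pr)
      = Re c * (\<integral>\<omega>. indicator A \<omega> * hr (X a \<omega>) \<partial>Pr) - Im c * (\<integral>\<omega>. indicator A \<omega> * hi (X a \<omega>) \<partial>Pr)" for a
  proof -
    have "(\<integral>\<omega>. indicator A \<omega> * Qr hr (X a \<omega>) \<partial>Pr)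
      = (\<integral>\<omega>. Re c * (indicator A \<omega> * hr (X a \<omega>)) - Im c * (indicator A \<omega> * hi (X a \<omega>)) \<partial>Pr)"
      by (intro Bochner_Integration.integral_cong refl) (simp add: Qr_eig Xspace algebra_simps)
    also have "\<dots> = Re c * (\<integral>\<omega>. indicator A \<omega> * hr (X a \<omega>) \<partial>Pr) - Im c * (\<integral>\<omega>. indicator A \<omega> * hi (X a \<omega>) \<partial>Pr)"
      using int_ind[OF As IL[OF hrF]] int_ind[OF As IL[OF hiF]] by simp
    finally show ?thesis .
  qed
  then show "Ir A (Suc n) = 2 * (Re c * Ir A n - Im c * Ii A n)"
    unfolding Ir_def Ii_def stepA[OF hrF A] by (simp add: sum_subtractf sum_distrib_left)
  have "(\<integral>\<omega>. indicator A \<omega> * Qr hi (X a \<omega>) \<partial>Pr)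
      = Im c * (\<integral>\<omega>. indicator A \<omega> * hr (X a \<omega>) \<partial>Pr) + Re c * (\<integral>\<omega>. indicator A \<omega> * hi (X a \<omega>) \<partial>Pr)" for a
  proof -
    have "(\<integral>\<omega>. indicator A \<omega> * Qr hi (X a \<omega>) \<partial>Pr)
      = (\<integral>\<omega>. Im c * (indicator A \<omega> * hr (X a \<omega>)) + Re c * (indicator A \<omega> * hi (X a \<omega>)) \<partial>Pr)"
      by (intro Bochner_Integration.integral_cong refl) (simp add: Qr_eig Xspace algebra_simps)
    also have "\<dots> = Im c * (\<integral>\<omega>. indicator A \<omega> * hr (X a \<omega>) \<partial>Pr) + Re c * (\<integral>\<omega>. indicator A \<omega> * hi (X a \<omega>) \<partial>Pr)"
      using int_ind[OF As IL[OF hrF]] int_ind[OF As IL[OF hiF]] by simp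
    finally show ?thesis .
  qed
  then show "Ii A (Suc n) = 2 * (Im c * Ir A n + Re c * Ii A n)"
    unfolding Ir_def Ii_def stepA[OF hiF A] by (simp add: sum.distrib sum_distrib_left)
qed

definition "CI A n = (\<integral>\<omega>. indicator A \<omega> *\<^sub>R (\<Sum>i\<in>Gen n. h (X i \<omega>)) \<partial>Pr)"

lemma CI_ReIm:
  assumes As: "A \<in> sets Pr"
  shows "Re (CI A n) = Ir A n" "Im (CI A n) = Ii A n"
proof -
  have ii: "integrable Pr (\<lambda>\<omega>. indicator A \<omega> *\<^sub>R h (X i \<omega>))" for i
    by (rule integrable_mult_indicator[OF As hX_int])
  have "CI A n = (\<Sum>i\<in>Gen n. \<integral>\<omega>. indicator A \<omega> *\<^sub>R h (X i \<omega>) \<partial>Pr)"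
    unfolding CI_def scaleR_sum_right by (rule Bochner_Integration.integral_sum) (rule ii)
  then show "Re (CI A n) = Ir A n" "Im (CI A n) = Ii A n"
    unfolding Ir_def Ii_def using ii
    by (simp_all add: integral_Re[symmetric] integral_Im[symmetric] hr_def hi_def del: integral_Re integral_Im)
qed

lemma CI_step:
  assumes A: "A \<in> sets (H n)"
  shows "CI A (Suc n) = 2 * c * CI A n"
proof -
  have As: "A \<in> sets Pr" using A H_sub_sets by blast
  show ?thesis
    by (rule complex_eqI) (simp_all add: CI_ReIm[OF As] stepRI[OF A] algebra_simps)
qed

lemma Mnj_eq: "Mnj X alj R j f n \<omega> = inverse ((2 * c) ^ n) * (\<Sum>i\<in>Gen n. h (X i \<omega>))"
  by (simp add: Mnj_def h_def c_def)

lemma Mnj_int: "integrable Pr (Mnj X alj R j f n)"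
  unfolding Mnj_eq[abs_def] by (intro integrable_mult_right Bochner_Integration.integrable_sum hX_int)

lemma Mnj_meas: "Mnj X alj R j f n \<in> borel_measurable (H n)"
proof -
  have "(\<lambda>\<omega>. h (X i \<omega>)) \<in> borel_measurable (H n)" if "i \<in> Gen n" for i
    using measurable_compose[OF X_H[OF Gen_Tn[OF that]] h_meas] by (simp add: comp_def)
  then have "(\<lambda>\<omega>. \<Sum>i\<in>Gen n. h (X i \<omega>)) \<in> borel_measurable (H n)"
    by (rule borel_measurable_sum)
  then show ?thesis unfolding Mnj_eq[abs_def] by measurable
qed

lemma Mnj_setint:
  assumes A: "A \<in> sets (H n)"
  shows "(\<integral>\<omega>. indicator A \<omega> *\<^sub>R Mnj X alj R j f (Suc n) \<omega> \<partial>Pr) = (\<integral>\<omega>. indicator A \<omega> *\<^sub>R Mnj X alj R j f n \<omega> \<partial>Pr)"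
proof -
  have e: "(\<integral>\<omega>. indicator A \<omega> *\<^sub>R Mnj X alj R j f k \<omega> \<partial>Pr) = inverse ((2 * c) ^ k) * CI A k" for k
  proof -
    have "(\<integral>\<omega>. indicator A \<omega> *\<^sub>R Mnj X alj R j f k \<omega> \<partial>Pr)
       = (\<integral>\<omega>. inverse ((2 * c) ^ k) * (indicator A \<omega> *\<^sub>R (\<Sum>i\<in>Gen k. h (X i \<omega>))) \<partial>Pr)"
      by (intro Bochner_Integration.integral_cong refl) (simp add: Mnj_eq scaleR_conv_of_real mult_ac)
    then show ?thesis by (simp only: CI_def integral_mult_right_zero)
  qed
  show ?thesis unfolding e CI_step[OF A] using c_nz by (simp add: field_simps)
qed

lemma mart: "cmartingale Pr (Hfilt Pr M X) (Mnj X alj R j f)"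
  unfolding cmartingale_def
proof (intro conjI allI)
  fix n
  interpret fms: finite_measure_subalgebra Pr "H n" by (rule H_fms)
  show "subalgebra Pr (H n)" by (rule subalg)
  show "sets (H n) \<subseteq> sets (H (Suc n))" by (rule H_mono) simp
  show "Mnj X alj R j f n \<in> borel_measurable (H n)" by (rule Mnj_meas)
  show "integrable Pr (Mnj X alj R j f n)" by (rule Mnj_int)
  have ri: "(\<integral>\<omega>. indicator A \<omega> * Re (Mnj X alj R j f k \<omega>) \<partial>Pr) = Re (\<integral>\<omega>. indicator A \<omega> *\<^sub>R Mnj X alj R j f k \<omega> \<partial>Pr)"
    "(\<integral>\<omega>. indicator A \<omega> * Im (Mnj X alj R j f k \<omega>) \<partial>Pr) = Im (\<integral>\<omega>. indicator A \<omega> *\<^sub>R Mnj X alj R j f k \<omega> \<partial>Pr)"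
    if A: "A \<in> sets (H n)" for A k
  proof -
    have As: "A \<in> sets Pr" using A H_sub_sets by blast
    have ii: "integrable Pr (\<lambda>\<omega>. indicator A \<omega> *\<^sub>R Mnj X alj R j f k \<omega>)"
      by (rule integrable_mult_indicator[OF As Mnj_int])
    show "(\<integral>\<omega>. indicator A \<omega> * Re (Mnj X alj R j f k \<omega>) \<partial>Pr) = Re (\<integral>\<omega>. indicator A \<omega> *\<^sub>R Mnj X alj R j f k \<omega> \<partial>Pr)"
      "(\<integral>\<omega>. indicator A \<omega> * Im (Mnj X alj R j f k \<omega>) \<partial>Pr) = Im (\<integral>\<omega>. indicator A \<omega> *\<^sub>R Mnj X alj R j f k \<omega> \<partial>Pr)"
      using ii by (simp_all add: integral_Re[symmetric] integral_Im[symmetric] del: integral_Re integral_Im)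
  qed
  show "AE \<omega> in Pr. real_cond_exp Pr (H n) (\<lambda>\<omega>. Re (Mnj X alj R j f (Suc n) \<omega>)) \<omega> = Re (Mnj X alj R j f n \<omega>)"
  proof (rule fms.real_cond_exp_charact)
    fix A assume A: "A \<in> sets (H n)"
    show "(\<integral>\<omega>\<in>A. Re (Mnj X alj R j f (Suc n) \<omega>) \<partial>Pr) = (\<integral>\<omega>\<in>A. Re (Mnj X alj R j f n \<omega>) \<partial>Pr)"
      unfolding set_lebesgue_integral_def using ri[OF A] Mnj_setint[OF A] by simp
  qed (use Mnj_int Mnj_meas in auto)
  show "AE \<omega> in Pr. real_cond_exp Pr (H n) (\<lambda>\<omega>. Im (Mnj X alj R j f (Suc n) \<omega>)) \<omega> = Im (Mnj X alj R j f n \<omega>)"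
  proof (rule fms.real_cond_exp_charact)
    fix A assume A: "A \<in> sets (H n)"
    show "(\<integral>\<omega>\<in>A. Im (Mnj X alj R j f (Suc n) \<omega>) \<partial>Pr) = (\<integral>\<omega>\<in>A. Im (Mnj X alj R j f n \<omega>) \<partial>Pr)"
      unfolding set_lebesgue_integral_def using ri[OF A] Mnj_setint[OF A] by simp
  qed (use Mnj_int Mnj_meas in auto)
qed

end


lemma abs_mult_le_sq: "\<bar>a * b\<bar> \<le> (a\<^sup>2 + b\<^sup>2) / (2::real)"
proof -
  have "0 \<le> (\<bar>a\<bar> - \<bar>b\<bar>)\<^sup>2" by simp
  then show ?thesis by (simp add: power2_eq_square abs_mult algebra_simps)
qed

lemma sq3: "(a + b + c)\<^sup>2 \<le> 3 * (a\<^sup>2 + b\<^sup>2 + (c::real)\<^sup>2)"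
proof -
  have "0 \<le> (a - b)\<^sup>2 + (b - c)\<^sup>2 + (a - c)\<^sup>2" by simp
  then show ?thesis by (simp add: power2_eq_square algebra_simps)
qed

context bmcF begin

lemma prod_int:
  fixes f g :: "'w \<Rightarrow> real"
  assumes "f \<in> borel_measurable Pr" "g \<in> borel_measurable Pr"
    "integrable Pr (\<lambda>\<omega>. (f \<omega>)\<^sup>2)" "integrable Pr (\<lambda>\<omega>. (g \<omega>)\<^sup>2)"
  shows "integrable Pr (\<lambda>\<omega>. f \<omega> * g \<omega>)"
proof (rule Bochner_Integration.integrable_bound[where f="\<lambda>\<omega>. ((f \<omega>)\<^sup>2 + (g \<omega>)\<^sup>2) / 2"])
  show "integrable Pr (\<lambda>\<omega>. ((f \<omega>)\<^sup>2 + (g \<omega>)\<^sup>2) / 2)" using assms by auto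
  show "(\<lambda>\<omega>. f \<omega> * g \<omega>) \<in> borel_measurable Pr" using assms by measurable
  show "AE \<omega> in Pr. norm (f \<omega> * g \<omega>) \<le> norm (((f \<omega>)\<^sup>2 + (g \<omega>)\<^sup>2) / 2)"
    using abs_mult_le_sq by (intro AE_I2) (simp add: abs_mult_le_sq)
qed

definition "xi u v a \<omega> = u (X (a @ [False]) \<omega>) + u (X (a @ [True]) \<omega>) + v (X a \<omega>)"

lemma xi_meas: "u \<in> F \<Longrightarrow> v \<in> F \<Longrightarrow> xi u v a \<in> borel_measurable Pr"
  unfolding xi_def[abs_def] using F_meas[of u] F_meas[of v] by measurable

lemma xi_sq_int:
  assumes u: "u \<in> F" and v: "v \<in> F"
  shows "integrable Pr (\<lambda>\<omega>. (xi u v a \<omega>)\<^sup>2)"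
proof (rule Bochner_Integration.integrable_bound[where f="\<lambda>\<omega>. 3 * ((u (X (a @ [False]) \<omega>))\<^sup>2 + (u (X (a @ [True]) \<omega>))\<^sup>2 + (v (X a \<omega>))\<^sup>2)"])
  show "integrable Pr (\<lambda>\<omega>. 3 * ((u (X (a @ [False]) \<omega>))\<^sup>2 + (u (X (a @ [True]) \<omega>))\<^sup>2 + (v (X a \<omega>))\<^sup>2))"
    using IL[OF F_sq[OF u]] IL[OF F_sq[OF v]] by auto
  show "(\<lambda>\<omega>. (xi u v a \<omega>)\<^sup>2) \<in> borel_measurable Pr" using xi_meas[OF u v] by measurable
  show "AE \<omega> in Pr. norm ((xi u v a \<omega>)\<^sup>2) \<le> norm (3 * ((u (X (a @ [False]) \<omega>))\<^sup>2 + (u (X (a @ [True]) \<omega>))\<^sup>2 + (v (X a \<omega>))\<^sup>2))"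
    by (intro AE_I2) (use sq3 in \<open>simp add: xi_def\<close>)
qed

lemma xi_prod_int:
  assumes u: "u \<in> F" and v: "v \<in> F"
  shows "integrable Pr (\<lambda>\<omega>. xi u v a \<omega> * xi u v b \<omega>)"
  by (rule prod_int[OF xi_meas[OF u v] xi_meas[OF u v] xi_sq_int[OF u v] xi_sq_int[OF u v]])

lemma cross0:
  assumes u: "u \<in> F" and v: "v \<in> F" and z: "\<And>x. x \<in> space M \<Longrightarrow> 2 * Qr u x + v x = 0"
    and a: "a \<in> Gen k" and b: "b \<in> Gen k" and ab: "a \<noteq> b"
  shows "(\<integral>\<omega>. xi u v a \<omega> * xi u v b \<omega> \<partial>Pr) = 0"
proof -
  define w where "w = (\<lambda>x. (u x)\<^sup>2 + 1)"
  have wF: "w \<in> F" unfolding w_def by (rule wF[OF u])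
  define \<Phi> where "\<Phi> = (\<lambda>x. 2 * Qr w x + (v x)\<^sup>2 + 1)"
  have \<Phi>F: "\<Phi> \<in> F" unfolding \<Phi>_def by (intro F_add F_cmult Qr_F wF F_sq v F_const)
  have iu1: "integrable (P x) (\<lambda>yz. u (fst yz))" and iu2: "integrable (P x) (\<lambda>yz. u (snd yz))"
    and iw1: "integrable (P x) (\<lambda>yz. w (fst yz))" and iw2: "integrable (P x) (\<lambda>yz. w (snd yz))"
    if x: "x \<in> space M" for x
    using side_Pint[OF u x, of False] side_Pint[OF u x, of True] side_Pint[OF wF x, of False] side_Pint[OF wF x, of True]
    by simp_all
  have "(\<integral>\<omega>. (\<lambda>x y z. u y + u z + v x) (X a \<omega>) (X (a @ [False]) \<omega>) (X (a @ [True]) \<omega>) *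
       (\<lambda>x y z. u y + u z + v x) (X b \<omega>) (X (b @ [False]) \<omega>) (X (b @ [True]) \<omega>) \<partial>Pr) = 0"
  proof (rule lim2[OF a b ab, where \<Phi>=\<Phi>])
    show "(\<lambda>(x, y, z). u y + u z + v x) \<in> borel_measurable (M \<Otimes>\<^sub>M M \<Otimes>\<^sub>M M)"
      using F_meas[OF u] F_meas[OF v] by measurable
    fix x assume x: "x \<in> space M"
    interpret Px: prob_space "P x" by (rule Pprob[OF x])
    show "integrable (P x) (\<lambda>yz. u (fst yz) + u (snd yz) + v x)"
      using iu1[OF x] iu2[OF x] by auto
    show "Pop3 P (\<lambda>x y z. u y + u z + v x) x = 0"
      using z[OF x] iu1[OF x] iu2[OF x] by (simp add: Pop3_def Qr_def Px.prob_space field_simps)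
    have "(\<integral>yz. \<bar>u (fst yz) + u (snd yz) + v x\<bar> \<partial>P x) \<le> (\<integral>yz. w (fst yz) + w (snd yz) + ((v x)\<^sup>2 + 1) \<partial>P x)"
    proof (rule integral_mono)
      show "integrable (P x) (\<lambda>yz. \<bar>u (fst yz) + u (snd yz) + v x\<bar>)"
        using iu1[OF x] iu2[OF x] by auto
      show "integrable (P x) (\<lambda>yz. w (fst yz) + w (snd yz) + ((v x)\<^sup>2 + 1))"
        using iw1[OF x] iw2[OF x] by auto
      fix yz
      show "\<bar>u (fst yz) + u (snd yz) + v x\<bar> \<le> w (fst yz) + w (snd yz) + ((v x)\<^sup>2 + 1)"
        using abs_le_sq1[of "u (fst yz)"] abs_le_sq1[of "u (snd yz)"] abs_le_sq1[of "v x"] unfolding w_def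
        by linarith
    qed
    also have "\<dots> = \<Phi> x"
      using iw1[OF x] iw2[OF x] by (simp add: \<Phi>_def Qr_def Px.prob_space)
    finally show "(\<integral>yz. \<bar>u (fst yz) + u (snd yz) + v x\<bar> \<partial>P x) \<le> \<Phi> x" .
  next
    show "integrable Pr (\<lambda>\<omega>. \<Phi> (X a \<omega>) * \<Phi> (X b \<omega>))"
      by (rule prod_int) (use F_meas[OF \<Phi>F] IL[OF F_sq[OF \<Phi>F]] in auto)
    show "integrable Pr (\<lambda>\<omega>. (u (X (a @ [False]) \<omega>) + u (X (a @ [True]) \<omega>) + v (X a \<omega>)) *
          (u (X (b @ [False]) \<omega>) + u (X (b @ [True]) \<omega>) + v (X b \<omega>)))"
      using xi_prod_int[OF u v, of a b] unfolding xi_def by simp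
  qed
  then show ?thesis unfolding xi_def by simp
qed

lemma sumsq:
  assumes u: "u \<in> F" and v: "v \<in> F" and z: "\<And>x. x \<in> space M \<Longrightarrow> 2 * Qr u x + v x = 0"
  shows "(\<integral>\<omega>. (\<Sum>a\<in>Gen k. xi u v a \<omega>)\<^sup>2 \<partial>Pr) = (\<Sum>a\<in>Gen k. \<integral>\<omega>. (xi u v a \<omega>)\<^sup>2 \<partial>Pr)"
proof -
  have "(\<integral>\<omega>. (\<Sum>a\<in>Gen k. xi u v a \<omega>)\<^sup>2 \<partial>Pr) = (\<integral>\<omega>. (\<Sum>a\<in>Gen k. \<Sum>b\<in>Gen k. xi u v a \<omega> * xi u v b \<omega>) \<partial>Pr)"
    by (simp add: power2_eq_square sum_product)
  also have "\<dots> = (\<Sum>a\<in>Gen k. \<Sum>b\<in>Gen k. \<integral>\<omega>. xi u v a \<omega> * xi u v b \<omega> \<partial>Pr)"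
    by (simp add: Bochner_Integration.integral_sum Bochner_Integration.integrable_sum xi_prod_int[OF u v])
  also have "\<dots> = (\<Sum>a\<in>Gen k. \<Sum>b\<in>Gen k. if a = b then \<integral>\<omega>. (xi u v a \<omega>)\<^sup>2 \<partial>Pr else 0)"
    by (intro sum.cong refl) (auto simp: power2_eq_square cross0[OF u v z])
  also have "\<dots> = (\<Sum>a\<in>Gen k. \<integral>\<omega>. (xi u v a \<omega>)\<^sup>2 \<partial>Pr)"
    using finite_Gen by simp
  finally show ?thesis .
qed

end

context bmain begin

lemma F3f1: "finite J" using F3 unfolding assmF3_def by (elim conjE) assumption
lemma F3f2: "\<forall>j'\<in>J. cmod (alj j') = \<alpha>" using F3 unfolding assmF3_def by (elim conjE) assumption
lemma F3f3: "\<forall>j'\<in>J. \<forall>h\<in>CF F. R j' h \<in> CF F" using F3 unfolding assmF3_def by (elim conjE) blast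
lemma F3f4: "\<forall>n. 0 < \<beta> n \<and> \<beta> n \<le> 1" using F3 unfolding assmF3_def by (elim conjE) assumption
lemma F3f5: "\<forall>f\<in>F. \<exists>g\<in>F. \<forall>n. \<forall>x\<in>space M.
        cmod ((Qop P ^^ n) (\<lambda>y. complex_of_real (f y)) x - complex_of_real (integral\<^sup>L \<mu> f)
              - complex_of_real (\<alpha> ^ n) *
                  (\<Sum>j\<in>J. (alj j / complex_of_real \<alpha>) ^ n * R j (\<lambda>y. complex_of_real (f y)) x))
        \<le> \<beta> n * \<alpha> ^ n * g x"
  using F3 unfolding assmF3_def by (elim conjE) assumption
lemmas F3facts = F3f1 F3f2 F3f3 F3f4 F3f5

lemma nu_prob: "prob_space \<nu>" using bmc by (simp add: BMC_def)
lemma space_nu: "space \<nu> = space M"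
proof -
  have "sets \<nu> = sets M" using bmc by (simp add: BMC_def)
  then show ?thesis by (rule sets_eq_imp_space_eq)
qed

definition "V = (\<lambda>x. (hr x)\<^sup>2 + (hi x)\<^sup>2)"
lemma VF: "V \<in> F" unfolding V_def by (intro F_add F_sq hrF hiF)

lemma KB: "\<exists>K. \<forall>n. (\<integral>x. (Qr ^^ n) V x \<partial>\<nu>) \<le> K"
proof -
  interpret nu: prob_space \<nu> by (rule nu_prob)
  define V' where "V' = (\<lambda>y. complex_of_real (V y))"
  obtain g where gF: "g \<in> F" and gb: "\<forall>n. \<forall>x\<in>space M.
        cmod ((Qop P ^^ n) V' x - complex_of_real (integral\<^sup>L \<mu> V)
              - complex_of_real (\<alpha> ^ n) *
                  (\<Sum>j\<in>J. (alj j / complex_of_real \<alpha>) ^ n * R j V' x))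
        \<le> \<beta> n * \<alpha> ^ n * g x"
    using F3facts(5) VF unfolding V'_def by blast
  have RF: "(\<lambda>x. Re (R j' V' x)) \<in> F" "(\<lambda>x. Im (R j' V' x)) \<in> F" if "j' \<in> J" for j'
    using F3facts(3) that CF_of_real[OF VF] unfolding V'_def CF_def by blast+
  define B where "B = (\<lambda>x. \<bar>integral\<^sup>L \<mu> V\<bar> + (\<Sum>j'\<in>J. \<bar>Re (R j' V' x)\<bar> + \<bar>Im (R j' V' x)\<bar>) + \<bar>g x\<bar>)"
  have Bi: "integrable \<nu> B"
    unfolding B_def using F_nu[OF gF] F_nu[OF RF(1)] F_nu[OF RF(2)]
    by (intro Bochner_Integration.integrable_add Bochner_Integration.integrable_sum integrable_abs) auto
  have pw: "(Qr ^^ n) V x \<le> B x" if x: "x \<in> space M" for n x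
  proof -
    define Q where "Q = complex_of_real ((Qr ^^ n) V x)"
    define m where "m = complex_of_real (integral\<^sup>L \<mu> V)"
    define S where "S = complex_of_real (\<alpha> ^ n) * (\<Sum>j\<in>J. (alj j / complex_of_real \<alpha>) ^ n * R j V' x)"
    have E: "cmod (Q - m - S) \<le> \<beta> n * \<alpha> ^ n * g x"
      using gb x unfolding Q_def m_def S_def V'_def Qopn by auto
    have b0: "0 < \<beta> n" "\<beta> n \<le> 1" using F3facts(4) by auto
    have a0: "0 < \<alpha> ^ n" "\<alpha> ^ n \<le> 1" using al_pos al2 by (auto simp: power_le_one)
    have "\<beta> n * \<alpha> ^ n * g x \<le> \<beta> n * \<alpha> ^ n * \<bar>g x\<bar>" using b0 a0 by (simp add: mult_left_mono)
    also have "\<dots> \<le> \<bar>g x\<bar>" using b0 a0 mult_le_one[of "\<beta> n" "\<alpha> ^ n"]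
      by (simp add: mult_left_le_one_le)
    finally have E2: "cmod (Q - m - S) \<le> \<bar>g x\<bar>" using E by linarith
    have "cmod S = \<alpha> ^ n * cmod (\<Sum>j\<in>J. (alj j / complex_of_real \<alpha>) ^ n * R j V' x)"
      unfolding S_def norm_mult norm_of_real using a0 by simp
    also have "\<dots> \<le> \<alpha> ^ n * (\<Sum>j\<in>J. cmod ((alj j / complex_of_real \<alpha>) ^ n * R j V' x))"
      using a0 by (intro mult_left_mono norm_sum) auto
    also have "\<dots> = \<alpha> ^ n * (\<Sum>j\<in>J. cmod (R j V' x))"
      using F3facts(2) al_pos by (simp add: norm_mult norm_power norm_divide)
    also have "\<dots> \<le> (\<Sum>j\<in>J. cmod (R j V' x))"
      using a0 by (simp add: mult_left_le_one_le sum_nonneg)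
    also have "\<dots> \<le> (\<Sum>j'\<in>J. \<bar>Re (R j' V' x)\<bar> + \<bar>Im (R j' V' x)\<bar>)"
      by (intro sum_mono cmod_le)
    finally have S2: "cmod S \<le> (\<Sum>j'\<in>J. \<bar>Re (R j' V' x)\<bar> + \<bar>Im (R j' V' x)\<bar>)" .
    have "(Qr ^^ n) V x = Re m + Re S + Re (Q - m - S)" by (simp add: Q_def m_def)
    also have "\<dots> \<le> \<bar>integral\<^sup>L \<mu> V\<bar> + cmod S + cmod (Q - m - S)"
      using abs_Re_le_cmod[of S] abs_Re_le_cmod[of "Q - m - S"] by (simp add: m_def)
    finally show ?thesis using S2 E2 unfolding B_def by linarith
  qed
  have "(\<integral>x. (Qr ^^ n) V x \<partial>\<nu>) \<le> integral\<^sup>L \<nu> B" for n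
    by (rule integral_mono[OF F_nu[OF Qrn_F[OF VF]] Bi]) (use pw space_nu in auto)
  then show ?thesis by blast
qed

end

context bmain begin

definition "vr = (\<lambda>x. - 2 * (Re c * hr x - Im c * hi x))"
definition "vi = (\<lambda>x. - 2 * (Im c * hr x + Re c * hi x))"
lemma vrF: "vr \<in> F" unfolding vr_def by (intro F_cmult F_diff F_add hrF hiF)
lemma viF: "vi \<in> F" unfolding vi_def by (intro F_cmult F_diff F_add hrF hiF)
lemma zr: "x \<in> space M \<Longrightarrow> 2 * Qr hr x + vr x = 0" by (simp add: Qr_eig vr_def)
lemma zi: "x \<in> space M \<Longrightarrow> 2 * Qr hi x + vi x = 0" by (simp add: Qr_eig vi_def)

lemma al2c: "(Re c)\<^sup>2 + (Im c)\<^sup>2 = \<alpha>\<^sup>2" using cmod_c cmod_power2[of c] by simp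

lemma vrvi: "(vr x)\<^sup>2 + (vi x)\<^sup>2 = 4 * \<alpha>\<^sup>2 * V x"
proof -
  have "(vr x)\<^sup>2 + (vi x)\<^sup>2 = 4 * ((Re c)\<^sup>2 + (Im c)\<^sup>2) * ((hr x)\<^sup>2 + (hi x)\<^sup>2)"
    by (simp add: vr_def vi_def power2_eq_square algebra_simps)
  then show ?thesis by (simp add: al2c V_def)
qed

definition "Dn n \<omega> = Mnj X alj R j f (Suc n) \<omega> - Mnj X alj R j f n \<omega>"

lemma D_eq: "Dn n \<omega> = inverse ((2 * c) ^ Suc n) *
   (\<Sum>a\<in>Gen n. complex_of_real (xi hr vr a \<omega>) + \<i> * complex_of_real (xi hi vi a \<omega>))"
proof -
  have pw: "h (X (a @ [False]) \<omega>) + h (X (a @ [True]) \<omega>) - 2 * c * h (X a \<omega>)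
      = complex_of_real (xi hr vr a \<omega>) + \<i> * complex_of_real (xi hi vi a \<omega>)" for a
    by (rule complex_eqI) (simp_all add: xi_def vr_def vi_def hr_def hi_def algebra_simps)
  have "Dn n \<omega> = inverse ((2 * c) ^ Suc n) * (\<Sum>a\<in>Gen n. h (X (a @ [False]) \<omega>) + h (X (a @ [True]) \<omega>))
      - inverse ((2 * c) ^ Suc n) * (2 * c) * (\<Sum>a\<in>Gen n. h (X a \<omega>))"
    unfolding Dn_def Mnj_eq sum_Gen_Suc using c_nz by (simp add: field_simps)
  also have "\<dots> = inverse ((2 * c) ^ Suc n) *
      (\<Sum>a\<in>Gen n. h (X (a @ [False]) \<omega>) + h (X (a @ [True]) \<omega>) - 2 * c * h (X a \<omega>))"
    by (simp add: sum_subtractf sum_distrib_left algebra_simps)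
  finally show ?thesis unfolding pw .
qed

lemma D_sq: "(cmod (Dn n \<omega>))\<^sup>2 = ((\<Sum>a\<in>Gen n. xi hr vr a \<omega>)\<^sup>2 + (\<Sum>a\<in>Gen n. xi hi vi a \<omega>)\<^sup>2) / (2 * \<alpha>) ^ (2 * Suc n)"
proof -
  define w where "w = (\<Sum>a\<in>Gen n. complex_of_real (xi hr vr a \<omega>) + \<i> * complex_of_real (xi hi vi a \<omega>))"
  have Rw: "Re w = (\<Sum>a\<in>Gen n. xi hr vr a \<omega>)" "Im w = (\<Sum>a\<in>Gen n. xi hi vi a \<omega>)"
    unfolding w_def by (simp_all add: Re_sum Im_sum)
  have n2: "cmod (2 * c) = 2 * \<alpha>" using cmod_c by (simp add: norm_mult)
  have "cmod (Dn n \<omega>) = inverse ((2 * \<alpha>) ^ Suc n) * cmod w"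
    unfolding D_eq w_def[symmetric] norm_mult norm_inverse norm_power by (simp add: cmod_c)
  then have "(cmod (Dn n \<omega>))\<^sup>2 = (cmod w)\<^sup>2 / ((2 * \<alpha>) ^ Suc n)\<^sup>2"
    by (simp only: power_mult_distrib divide_inverse power_inverse mult.commute)
  also have "((2 * \<alpha>) ^ Suc n)\<^sup>2 = (2 * \<alpha>) ^ (2 * Suc n)"
    by (simp only: power_mult[symmetric] mult.commute)
  also have "(cmod w)\<^sup>2 = (Re w)\<^sup>2 + (Im w)\<^sup>2" by (rule cmod_power2)
  finally show ?thesis unfolding Rw .
qed

lemma sq_sum_int:
  assumes u: "u \<in> F" and v: "v \<in> F"
  shows "integrable Pr (\<lambda>\<omega>. (\<Sum>a\<in>Gen k. xi u v a \<omega>)\<^sup>2)"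
proof -
  have "integrable Pr (\<lambda>\<omega>. \<Sum>a\<in>Gen k. \<Sum>b\<in>Gen k. xi u v a \<omega> * xi u v b \<omega>)"
    by (intro Bochner_Integration.integrable_sum xi_prod_int u v)
  then show ?thesis by (simp add: power2_eq_square sum_product)
qed

lemma Dsq_int: "integrable Pr (\<lambda>\<omega>. (cmod (Dn n \<omega>))\<^sup>2)"
  unfolding D_sq using sq_sum_int[OF hrF vrF] sq_sum_int[OF hiF viF] by auto

lemma ED: "(\<integral>\<omega>. (cmod (Dn n \<omega>))\<^sup>2 \<partial>Pr) \<le> 3 * ((\<Sum>i\<in>Gen (Suc n). \<integral>\<omega>. V (X i \<omega>) \<partial>Pr) +
     4 * \<alpha>\<^sup>2 * (\<Sum>i\<in>Gen n. \<integral>\<omega>. V (X i \<omega>) \<partial>Pr)) / (2 * \<alpha>) ^ (2 * Suc n)"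
proof -
  have pos: "0 < (2 * \<alpha>) ^ (2 * Suc n)" using al_pos by simp
  have "(\<integral>\<omega>. (cmod (Dn n \<omega>))\<^sup>2 \<partial>Pr) = ((\<integral>\<omega>. (\<Sum>a\<in>Gen n. xi hr vr a \<omega>)\<^sup>2 \<partial>Pr) +
       (\<integral>\<omega>. (\<Sum>a\<in>Gen n. xi hi vi a \<omega>)\<^sup>2 \<partial>Pr)) / (2 * \<alpha>) ^ (2 * Suc n)"
    unfolding D_sq using sq_sum_int[OF hrF vrF] sq_sum_int[OF hiF viF] by simp
  also have "\<dots> = (\<Sum>a\<in>Gen n. \<integral>\<omega>. (xi hr vr a \<omega>)\<^sup>2 + (xi hi vi a \<omega>)\<^sup>2 \<partial>Pr) / (2 * \<alpha>) ^ (2 * Suc n)"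
    using sumsq[OF hrF vrF zr, of n] sumsq[OF hiF viF zi, of n]
    using xi_sq_int[OF hrF vrF] xi_sq_int[OF hiF viF] by (simp add: sum.distrib)
  also have "\<dots> \<le> (\<Sum>a\<in>Gen n. 3 * ((\<integral>\<omega>. V (X (a @ [False]) \<omega>) \<partial>Pr) + (\<integral>\<omega>. V (X (a @ [True]) \<omega>) \<partial>Pr)
          + 4 * \<alpha>\<^sup>2 * (\<integral>\<omega>. V (X a \<omega>) \<partial>Pr))) / (2 * \<alpha>) ^ (2 * Suc n)"
  proof (intro divide_right_mono sum_mono)
    fix a
    have "(\<integral>\<omega>. (xi hr vr a \<omega>)\<^sup>2 + (xi hi vi a \<omega>)\<^sup>2 \<partial>Pr)
        \<le> (\<integral>\<omega>. 3 * (V (X (a @ [False]) \<omega>) + V (X (a @ [True]) \<omega>) + 4 * \<alpha>\<^sup>2 * V (X a \<omega>)) \<partial>Pr)"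
    proof (rule integral_mono)
      show "integrable Pr (\<lambda>\<omega>. (xi hr vr a \<omega>)\<^sup>2 + (xi hi vi a \<omega>)\<^sup>2)"
        using xi_sq_int[OF hrF vrF] xi_sq_int[OF hiF viF] by auto
      show "integrable Pr (\<lambda>\<omega>. 3 * (V (X (a @ [False]) \<omega>) + V (X (a @ [True]) \<omega>) + 4 * \<alpha>\<^sup>2 * V (X a \<omega>)))"
        using IL[OF VF] by auto
      fix \<omega>
      have "(xi hr vr a \<omega>)\<^sup>2 + (xi hi vi a \<omega>)\<^sup>2 \<le>
         3 * ((hr (X (a @ [False]) \<omega>))\<^sup>2 + (hr (X (a @ [True]) \<omega>))\<^sup>2 + (vr (X a \<omega>))\<^sup>2) +
         3 * ((hi (X (a @ [False]) \<omega>))\<^sup>2 + (hi (X (a @ [True]) \<omega>))\<^sup>2 + (vi (X a \<omega>))\<^sup>2)"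
        unfolding xi_def by (intro add_mono sq3)
      also have "\<dots> = 3 * (V (X (a @ [False]) \<omega>) + V (X (a @ [True]) \<omega>) + ((vr (X a \<omega>))\<^sup>2 + (vi (X a \<omega>))\<^sup>2))"
        by (simp add: V_def algebra_simps)
      finally show "(xi hr vr a \<omega>)\<^sup>2 + (xi hi vi a \<omega>)\<^sup>2 \<le> 3 * (V (X (a @ [False]) \<omega>) + V (X (a @ [True]) \<omega>) + 4 * \<alpha>\<^sup>2 * V (X a \<omega>))"
        by (simp add: vrvi)
    qed
    also have "\<dots> = 3 * ((\<integral>\<omega>. V (X (a @ [False]) \<omega>) \<partial>Pr) + (\<integral>\<omega>. V (X (a @ [True]) \<omega>) \<partial>Pr)
          + 4 * \<alpha>\<^sup>2 * (\<integral>\<omega>. V (X a \<omega>) \<partial>Pr))"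
      using IL[OF VF] by simp
    finally show "(\<integral>\<omega>. (xi hr vr a \<omega>)\<^sup>2 + (xi hi vi a \<omega>)\<^sup>2 \<partial>Pr) \<le> 3 * ((\<integral>\<omega>. V (X (a @ [False]) \<omega>) \<partial>Pr) + (\<integral>\<omega>. V (X (a @ [True]) \<omega>) \<partial>Pr)
          + 4 * \<alpha>\<^sup>2 * (\<integral>\<omega>. V (X a \<omega>) \<partial>Pr))" .
  qed (use pos in simp)
  also have "\<dots> = 3 * ((\<Sum>i\<in>Gen (Suc n). \<integral>\<omega>. V (X i \<omega>) \<partial>Pr) +
     4 * \<alpha>\<^sup>2 * (\<Sum>i\<in>Gen n. \<integral>\<omega>. V (X i \<omega>) \<partial>Pr)) / (2 * \<alpha>) ^ (2 * Suc n)"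
    unfolding sum_Gen_Suc by (simp add: sum.distrib sum_distrib_left algebra_simps)
  finally show ?thesis .
qed

lemma Dbound: "\<exists>C q. 0 \<le> C \<and> 0 < q \<and> q < 1 \<and> (\<forall>n. (\<integral>\<omega>. (cmod (Dn n \<omega>))\<^sup>2 \<partial>Pr) \<le> C * q ^ n)"
proof -
  obtain K where K: "\<And>n. (\<integral>x. (Qr ^^ n) V x \<partial>\<nu>) \<le> K" using KB by blast
  define K0 where "K0 = max K 0"
  have K0: "(\<integral>x. (Qr ^^ n) V x \<partial>\<nu>) \<le> K0" "0 \<le> K0" for n using K[of n] by (auto simp: K0_def)
  have S: "(\<Sum>i\<in>Gen n. \<integral>\<omega>. V (X i \<omega>) \<partial>Pr) \<le> 2 ^ n * K0" for n
    unfolding SF[OF VF] by (intro mult_left_mono K0) simp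
  define q where "q = 1 / (2 * \<alpha>\<^sup>2)"
  define C where "C = 3 * K0 * (2 + 4 * \<alpha>\<^sup>2) / (4 * \<alpha>\<^sup>2)"
  have a2: "1 / 2 < \<alpha>\<^sup>2"
  proof -
    have "(1 / sqrt 2)\<^sup>2 < \<alpha>\<^sup>2" using al1 by (intro power_strict_mono) auto
    then show ?thesis by (simp add: power_divide)
  qed
  have q: "0 < q" "q < 1" using a2 al_pos by (auto simp: q_def field_simps)
  have C: "0 \<le> C" using K0 by (simp add: C_def)
  have "(\<integral>\<omega>. (cmod (Dn n \<omega>))\<^sup>2 \<partial>Pr) \<le> C * q ^ n" for n
  proof -
    have pos: "0 < (2 * \<alpha>) ^ (2 * Suc n)" using al_pos by simp
    have "(\<integral>\<omega>. (cmod (Dn n \<omega>))\<^sup>2 \<partial>Pr) \<le> 3 * (2 ^ Suc n * K0 + 4 * \<alpha>\<^sup>2 * (2 ^ n * K0)) / (2 * \<alpha>) ^ (2 * Suc n)"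
      using ED[of n] S[of n] S[of "Suc n"] pos al_pos
      by (smt (verit, best) divide_right_mono mult_left_mono zero_le_power2)
    also have "\<dots> = C * q ^ n"
    proof -
      have e1: "(2 * \<alpha>) ^ (2 * Suc n) = (4 * \<alpha>\<^sup>2) * (4 * \<alpha>\<^sup>2) ^ n"
        by (simp add: power_mult power_mult_distrib power2_eq_square)
      have e2: "q ^ n = 2 ^ n / (4 * \<alpha>\<^sup>2) ^ n"
        unfolding q_def power_divide[symmetric] using al_pos by (simp add: field_simps)
      show ?thesis unfolding e1 e2 C_def using al_pos by (simp add: field_simps)
    qed
    finally show ?thesis .
  qed
  then show ?thesis using q C by blast
qed

end


lemma tele: "n \<le> m \<Longrightarrow> (\<Sum>k\<in>{n..<m}. g (Suc k) - g k) = g m - (g n :: 'a::ab_group_add)"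
  by (induction m rule: dec_induct) (simp_all add: algebra_simps)

lemma geo_tail:
  fixes r :: real
  assumes "0 \<le> r" "r < 1"
  shows "(\<Sum>k\<in>{n..<m}. r ^ k) \<le> r ^ n / (1 - r)"
proof (cases "n \<le> m")
  case True
  have "(\<Sum>k\<in>{n..<m}. r ^ k) = (\<Sum>k\<in>{0..<m}. r ^ k) - (\<Sum>k\<in>{0..<n}. r ^ k)"
    using sum_diff_nat_ivl[of 0 n m "\<lambda>k. r ^ k"] True by simp
  also have "\<dots> = (1 - r ^ m) / (1 - r) - (1 - r ^ n) / (1 - r)"
    using assms by (simp add: atLeast0LessThan sum_gp_strict)
  also have "\<dots> = (r ^ n - r ^ m) / (1 - r)"
    by (simp add: diff_divide_distrib[symmetric])
  also have "\<dots> \<le> r ^ n / (1 - r)" using assms by (intro divide_right_mono) auto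
  finally show ?thesis .
next
  case False
  then show ?thesis using assms by auto
qed

lemma sq_sum_cs:
  fixes a w :: "nat \<Rightarrow> real"
  assumes "\<And>k. k \<in> I \<Longrightarrow> 0 < w k"
  shows "(\<Sum>k\<in>I. a k)\<^sup>2 \<le> (\<Sum>k\<in>I. w k) * (\<Sum>k\<in>I. (a k)\<^sup>2 / w k)"
proof -
  have "(\<Sum>k\<in>I. sqrt (w k) * (a k / sqrt (w k)))\<^sup>2 \<le> (\<Sum>k\<in>I. (sqrt (w k))\<^sup>2) * (\<Sum>k\<in>I. (a k / sqrt (w k))\<^sup>2)"
    by (rule Cauchy_Schwarz_ineq_sum)
  moreover have "(\<Sum>k\<in>I. sqrt (w k) * (a k / sqrt (w k))) = (\<Sum>k\<in>I. a k)"
    using assms by (intro sum.cong) (auto simp: less_imp_neq[symmetric])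
  moreover have "(\<Sum>k\<in>I. (sqrt (w k))\<^sup>2) = (\<Sum>k\<in>I. w k)"
    using assms by (intro sum.cong) (auto simp: less_imp_le)
  moreover have "(\<Sum>k\<in>I. (a k / sqrt (w k))\<^sup>2) = (\<Sum>k\<in>I. (a k)\<^sup>2 / w k)"
    using assms by (intro sum.cong) (auto simp: power_divide less_imp_le)
  ultimately show ?thesis by simp
qed

lemma sq_add_le: "(x + y)\<^sup>2 \<le> 2 * x\<^sup>2 + 2 * (y::real)\<^sup>2"
proof -
  have "0 \<le> (x - y)\<^sup>2" by simp
  then show ?thesis by (simp add: power2_eq_square algebra_simps)
qed

lemma dif2: "(cmod (a - b))\<^sup>2 \<le> 2 * (cmod a)\<^sup>2 + 2 * (cmod b)\<^sup>2"
proof -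
  have "(cmod (a - b))\<^sup>2 \<le> (cmod a + cmod b)\<^sup>2"
    by (intro power_mono norm_triangle_ineq4) auto
  also have "\<dots> \<le> 2 * (cmod a)\<^sup>2 + 2 * (cmod b)\<^sup>2" by (rule sq_add_le)
  finally show ?thesis .
qed

lemma am_gm_r: "0 < s \<Longrightarrow> t \<le> (s + t\<^sup>2 / s) / (2::real)"
proof -
  assume s: "0 < s"
  have "0 \<le> (t - s)\<^sup>2" by simp
  then have "2 * t * s \<le> s * s + t * t" by (simp add: power2_eq_square algebra_simps)
  then show ?thesis using s by (simp add: field_simps power2_eq_square)
qed

lemma (in prob_space) L2conv:
  fixes Z :: "nat \<Rightarrow> 'a \<Rightarrow> complex"
  assumes Zm: "\<And>n. Z n \<in> borel_measurable M"
    and Z2: "\<And>n. integrable M (\<lambda>\<omega>. (cmod (Z n \<omega>))\<^sup>2)"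
    and C: "0 \<le> C" and q0: "0 < q" and q1: "q < 1"
    and Db: "\<And>n. (\<integral>\<omega>. (cmod (Z (Suc n) \<omega> - Z n \<omega>))\<^sup>2 \<partial>M) \<le> C * q ^ n"
  shows "\<exists>Zinf. conv_as_L2 M Z Zinf"
proof -
  define D where "D n \<omega> = Z (Suc n) \<omega> - Z n \<omega>" for n \<omega>
  define r where "r = sqrt q"
  have r0: "0 < r" and r1: "r < 1" and rq: "q = r\<^sup>2" using q0 q1 by (auto simp: r_def)
  have Dm: "D n \<in> borel_measurable M" for n unfolding D_def[abs_def] using Zm by measurable
  have diffint: "integrable M (\<lambda>\<omega>. (cmod (Z m \<omega> - Z n \<omega>))\<^sup>2)" for m n
  proof (rule Bochner_Integration.integrable_bound[where f="\<lambda>\<omega>. 2 * (cmod (Z m \<omega>))\<^sup>2 + 2 * (cmod (Z n \<omega>))\<^sup>2"])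
    show "integrable M (\<lambda>\<omega>. 2 * (cmod (Z m \<omega>))\<^sup>2 + 2 * (cmod (Z n \<omega>))\<^sup>2)" using Z2 by auto
    show "(\<lambda>\<omega>. (cmod (Z m \<omega> - Z n \<omega>))\<^sup>2) \<in> borel_measurable M" using Zm by measurable
    show "AE \<omega> in M. norm ((cmod (Z m \<omega> - Z n \<omega>))\<^sup>2) \<le> norm (2 * (cmod (Z m \<omega>))\<^sup>2 + 2 * (cmod (Z n \<omega>))\<^sup>2)"
      using dif2 by (intro AE_I2) simp
  qed
  have D2: "integrable M (\<lambda>\<omega>. (cmod (D n \<omega>))\<^sup>2)" for n unfolding D_def by (rule diffint)
  have ED: "(\<integral>\<omega>. (cmod (D n \<omega>))\<^sup>2 \<partial>M) \<le> C * r ^ (2 * n)" for n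
    using Db[of n] unfolding D_def rq by (simp add: power_mult)
  have D1i: "integrable M (\<lambda>\<omega>. cmod (D n \<omega>))" for n
  proof (rule Bochner_Integration.integrable_bound[where f="\<lambda>\<omega>. (cmod (D n \<omega>))\<^sup>2 + 1"])
    show "integrable M (\<lambda>\<omega>. (cmod (D n \<omega>))\<^sup>2 + 1)" using D2 by auto
    show "(\<lambda>\<omega>. cmod (D n \<omega>)) \<in> borel_measurable M" using Dm by measurable
    show "AE \<omega> in M. norm (cmod (D n \<omega>)) \<le> norm ((cmod (D n \<omega>))\<^sup>2 + 1)"
    proof (intro AE_I2)
      fix \<omega>
      have "0 \<le> (cmod (D n \<omega>) - 1)\<^sup>2" by simp
      then show "norm (cmod (D n \<omega>)) \<le> norm ((cmod (D n \<omega>))\<^sup>2 + 1)"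
        by (simp add: power2_eq_square algebra_simps) (smt (verit) norm_ge_zero)
    qed
  qed
  have ED1: "(\<integral>\<omega>. cmod (D n \<omega>) \<partial>M) \<le> (1 + C) / 2 * r ^ n" for n
  proof -
    have rn: "0 < r ^ n" using r0 by simp
    have "(\<integral>\<omega>. cmod (D n \<omega>) \<partial>M) \<le> (\<integral>\<omega>. (r ^ n + (cmod (D n \<omega>))\<^sup>2 / r ^ n) / 2 \<partial>M)"
      by (rule integral_mono[OF D1i]) (use D2 am_gm_r[OF rn] in auto)
    also have "\<dots> = (r ^ n + (\<integral>\<omega>. (cmod (D n \<omega>))\<^sup>2 \<partial>M) / r ^ n) / 2"
      using D2[of n] by (simp add: prob_space)
    also have "\<dots> \<le> (r ^ n + C * r ^ (2 * n) / r ^ n) / 2"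
      using ED[of n] rn by (intro divide_right_mono add_left_mono) auto
    also have "\<dots> = (1 + C) / 2 * r ^ n"
      using rn by (simp add: power_mult power2_eq_square field_simps)
    finally show ?thesis .
  qed
  have summ: "summable (\<lambda>n. \<integral>\<omega>. cmod (D n \<omega>) \<partial>M)"
  proof (rule summable_comparison_test[where g="\<lambda>n. (1 + C) / 2 * r ^ n"])
    show "\<exists>N. \<forall>n\<ge>N. norm (\<integral>\<omega>. cmod (D n \<omega>) \<partial>M) \<le> (1 + C) / 2 * r ^ n"
      using ED1 by (auto simp: integral_nonneg_AE)
    show "summable (\<lambda>n. (1 + C) / 2 * r ^ n)" using r0 r1 by (intro summable_mult summable_geometric) auto
  qed
  have "(\<integral>\<^sup>+\<omega>. (\<Sum>n. ennreal (cmod (D n \<omega>))) \<partial>M) = (\<Sum>n. \<integral>\<^sup>+\<omega>. ennreal (cmod (D n \<omega>)) \<partial>M)"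
    by (rule nn_integral_suminf) (use Dm in measurable)
  also have "\<dots> = (\<Sum>n. ennreal (\<integral>\<omega>. cmod (D n \<omega>) \<partial>M))"
    by (intro suminf_cong nn_integral_eq_integral D1i) auto
  also have "\<dots> = ennreal (\<Sum>n. \<integral>\<omega>. cmod (D n \<omega>) \<partial>M)"
    by (rule suminf_ennreal2[OF _ summ]) auto
  finally have fin: "(\<integral>\<^sup>+\<omega>. (\<Sum>n. ennreal (cmod (D n \<omega>))) \<partial>M) \<noteq> \<infinity>" by simp
  have "AE \<omega> in M. (\<Sum>n. ennreal (cmod (D n \<omega>))) \<noteq> \<infinity>"
    by (rule nn_integral_PInf_AE[OF _ fin]) (use Dm in measurable)
  then have AEs: "AE \<omega> in M. summable (\<lambda>n. cmod (D n \<omega>))"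
    by eventually_elim (rule summable_suminf_not_top, auto)
  define Zinf where "Zinf \<omega> = lim (\<lambda>n. Z n \<omega>)" for \<omega>
  have Zinfm: "Zinf \<in> borel_measurable M" unfolding Zinf_def[abs_def] using Zm by measurable
  have AElim: "AE \<omega> in M. (\<lambda>n. Z n \<omega>) \<longlonglongrightarrow> Zinf \<omega>"
    using AEs
  proof eventually_elim
    case (elim \<omega>)
    then have "summable (\<lambda>n. D n \<omega>)" by (rule summable_norm_cancel)
    then have "(\<lambda>m. \<Sum>k<m. D k \<omega>) \<longlonglongrightarrow> (\<Sum>k. D k \<omega>)" by (rule summable_LIMSEQ)
    then have "(\<lambda>m. Z 0 \<omega> + (\<Sum>k<m. D k \<omega>)) \<longlonglongrightarrow> Z 0 \<omega> + (\<Sum>k. D k \<omega>)" by (intro tendsto_add tendsto_const)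
    moreover have "Z 0 \<omega> + (\<Sum>k<m. D k \<omega>) = Z m \<omega>" for m
      unfolding D_def by (subst sum_lessThan_telescope) simp
    ultimately have "convergent (\<lambda>n. Z n \<omega>)" unfolding convergent_def by auto
    then show ?case unfolding Zinf_def by (simp add: convergent_LIMSEQ_iff)
  qed
  define B where "B n = C * (r ^ n / (1 - r))\<^sup>2" for n
  have B0: "0 \<le> B n" for n using C by (simp add: B_def)
  have EZ: "(\<integral>\<omega>. (cmod (Z m \<omega> - Z n \<omega>))\<^sup>2 \<partial>M) \<le> B n" if nm: "n \<le> m" for n m
  proof -
    define S where "S = (\<Sum>k\<in>{n..<m}. r ^ k)"
    have S0: "0 \<le> S" unfolding S_def by (simp add: sum_nonneg r0 less_imp_le)
    have SB: "S \<le> r ^ n / (1 - r)" unfolding S_def by (rule geo_tail) (use r0 r1 in auto)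
    have pw: "(cmod (Z m \<omega> - Z n \<omega>))\<^sup>2 \<le> S * (\<Sum>k\<in>{n..<m}. (cmod (D k \<omega>))\<^sup>2 / r ^ k)" for \<omega>
    proof -
      have "cmod (Z m \<omega> - Z n \<omega>) = cmod (\<Sum>k\<in>{n..<m}. D k \<omega>)"
        unfolding D_def using tele[OF nm, of "\<lambda>k. Z k \<omega>"] by simp
      also have "\<dots> \<le> (\<Sum>k\<in>{n..<m}. cmod (D k \<omega>))" by (rule norm_sum)
      finally have "(cmod (Z m \<omega> - Z n \<omega>))\<^sup>2 \<le> (\<Sum>k\<in>{n..<m}. cmod (D k \<omega>))\<^sup>2"
        by (intro power_mono) auto
      also have "\<dots> \<le> S * (\<Sum>k\<in>{n..<m}. (cmod (D k \<omega>))\<^sup>2 / r ^ k)"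
        unfolding S_def by (rule sq_sum_cs) (use r0 in auto)
      finally show ?thesis .
    qed
    have "(\<integral>\<omega>. (cmod (Z m \<omega> - Z n \<omega>))\<^sup>2 \<partial>M) \<le> (\<integral>\<omega>. S * (\<Sum>k\<in>{n..<m}. (cmod (D k \<omega>))\<^sup>2 / r ^ k) \<partial>M)"
      by (rule integral_mono[OF diffint]) (use D2 pw in auto)
    also have "\<dots> = S * (\<Sum>k\<in>{n..<m}. (\<integral>\<omega>. (cmod (D k \<omega>))\<^sup>2 \<partial>M) / r ^ k)"
      using D2 by (simp add: Bochner_Integration.integral_sum)
    also have "\<dots> \<le> S * (\<Sum>k\<in>{n..<m}. C * r ^ k)"
    proof (intro mult_left_mono[OF _ S0] sum_mono)
      fix k
      have "(\<integral>\<omega>. (cmod (D k \<omega>))\<^sup>2 \<partial>M) / r ^ k \<le> C * r ^ (2 * k) / r ^ k"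
        using ED[of k] r0 by (intro divide_right_mono) auto
      also have "\<dots> = C * r ^ k" using r0 by (simp add: power_mult power2_eq_square field_simps)
      finally show "(\<integral>\<omega>. (cmod (D k \<omega>))\<^sup>2 \<partial>M) / r ^ k \<le> C * r ^ k" .
    qed
    also have "\<dots> = C * S\<^sup>2" by (simp add: S_def sum_distrib_left power2_eq_square mult_ac)
    also have "\<dots> \<le> B n" unfolding B_def using S0 SB C by (intro mult_left_mono power_mono) auto
    finally show ?thesis .
  qed
  have nnB: "(\<integral>\<^sup>+\<omega>. ennreal ((cmod (Z n \<omega> - Zinf \<omega>))\<^sup>2) \<partial>M) \<le> ennreal (B n)" for n
  proof -
    have "(\<integral>\<^sup>+\<omega>. ennreal ((cmod (Z n \<omega> - Zinf \<omega>))\<^sup>2) \<partial>M)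
        = (\<integral>\<^sup>+\<omega>. liminf (\<lambda>m. ennreal ((cmod (Z m \<omega> - Z n \<omega>))\<^sup>2)) \<partial>M)"
    proof (rule nn_integral_cong_AE)
      show "AE \<omega> in M. ennreal ((cmod (Z n \<omega> - Zinf \<omega>))\<^sup>2) = liminf (\<lambda>m. ennreal ((cmod (Z m \<omega> - Z n \<omega>))\<^sup>2))"
        using AElim
      proof eventually_elim
        case (elim \<omega>)
        have "(\<lambda>m. ennreal ((cmod (Z m \<omega> - Z n \<omega>))\<^sup>2)) \<longlonglongrightarrow> ennreal ((cmod (Zinf \<omega> - Z n \<omega>))\<^sup>2)"
          by (intro tendsto_ennrealI tendsto_power tendsto_norm tendsto_diff elim tendsto_const)
        then have "liminf (\<lambda>m. ennreal ((cmod (Z m \<omega> - Z n \<omega>))\<^sup>2)) = ennreal ((cmod (Zinf \<omega> - Z n \<omega>))\<^sup>2)"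
          by (intro lim_imp_Liminf) auto
        then show ?case by (simp add: norm_minus_commute)
      qed
    qed
    also have "\<dots> \<le> liminf (\<lambda>m. \<integral>\<^sup>+\<omega>. ennreal ((cmod (Z m \<omega> - Z n \<omega>))\<^sup>2) \<partial>M)"
      by (rule nn_integral_liminf) (use Zm in measurable)
    also have "\<dots> \<le> ennreal (B n)"
    proof (rule Liminf_le)
      show "\<forall>\<^sub>F m in sequentially. (\<integral>\<^sup>+\<omega>. ennreal ((cmod (Z m \<omega> - Z n \<omega>))\<^sup>2) \<partial>M) \<le> ennreal (B n)"
        unfolding eventually_sequentially
      proof (intro exI allI impI)
        fix m assume "n \<le> m"
        then show "(\<integral>\<^sup>+\<omega>. ennreal ((cmod (Z m \<omega> - Z n \<omega>))\<^sup>2) \<partial>M) \<le> ennreal (B n)"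
          using EZ[of n m] by (subst nn_integral_eq_integral[OF diffint]) (auto intro: ennreal_leI)
      qed
    qed simp
    finally show ?thesis .
  qed
  have Zdm: "(\<lambda>\<omega>. (cmod (Z n \<omega> - Zinf \<omega>))\<^sup>2) \<in> borel_measurable M" for n using Zm Zinfm by measurable
  have Zdi: "integrable M (\<lambda>\<omega>. (cmod (Z n \<omega> - Zinf \<omega>))\<^sup>2)" for n
    by (rule integrableI_nonneg[OF Zdm]) (auto intro: le_less_trans[OF nnB[of n] ennreal_less_top])
  have ZdB: "(\<integral>\<omega>. (cmod (Z n \<omega> - Zinf \<omega>))\<^sup>2 \<partial>M) \<le> B n" for n
  proof -
    have "ennreal (\<integral>\<omega>. (cmod (Z n \<omega> - Zinf \<omega>))\<^sup>2 \<partial>M) = (\<integral>\<^sup>+\<omega>. ennreal ((cmod (Z n \<omega> - Zinf \<omega>))\<^sup>2) \<partial>M)"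
      by (rule nn_integral_eq_integral[OF Zdi, symmetric]) auto
    then have "ennreal (\<integral>\<omega>. (cmod (Z n \<omega> - Zinf \<omega>))\<^sup>2 \<partial>M) \<le> ennreal (B n)" using nnB[of n] by simp
    then show ?thesis using B0[of n] by (simp add: ennreal_le_iff)
  qed
  have Blim: "B \<longlonglongrightarrow> 0"
  proof -
    have "B = (\<lambda>n. C / (1 - r)\<^sup>2 * (r\<^sup>2) ^ n)"
      by (simp add: B_def fun_eq_iff power_divide power2_eq_square power_mult_distrib)
    moreover have "(\<lambda>n. C / (1 - r)\<^sup>2 * (r\<^sup>2) ^ n) \<longlonglongrightarrow> C / (1 - r)\<^sup>2 * 0"
    proof (intro tendsto_mult tendsto_const LIMSEQ_power_zero)
      have "r * r < 1 * 1" using r0 r1 by (intro mult_strict_mono) auto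
      then show "norm (r\<^sup>2) < 1" using r0 by (simp add: power2_eq_square)
    qed
    ultimately show ?thesis by simp
  qed
  have Llim: "(\<lambda>n. \<integral>\<omega>. (cmod (Z n \<omega> - Zinf \<omega>))\<^sup>2 \<partial>M) \<longlonglongrightarrow> 0"
    by (rule real_tendsto_sandwich[OF _ _ tendsto_const Blim]) (auto intro!: always_eventually ZdB integral_nonneg_AE)
  have Zinf2: "integrable M (\<lambda>\<omega>. (cmod (Zinf \<omega>))\<^sup>2)"
  proof (rule Bochner_Integration.integrable_bound[where f="\<lambda>\<omega>. 2 * (cmod (Z 0 \<omega> - Zinf \<omega>))\<^sup>2 + 2 * (cmod (Z 0 \<omega>))\<^sup>2"])
    show "integrable M (\<lambda>\<omega>. 2 * (cmod (Z 0 \<omega> - Zinf \<omega>))\<^sup>2 + 2 * (cmod (Z 0 \<omega>))\<^sup>2)" using Zdi Z2 by auto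
    show "(\<lambda>\<omega>. (cmod (Zinf \<omega>))\<^sup>2) \<in> borel_measurable M" using Zinfm by measurable
    show "AE \<omega> in M. norm ((cmod (Zinf \<omega>))\<^sup>2) \<le> norm (2 * (cmod (Z 0 \<omega> - Zinf \<omega>))\<^sup>2 + 2 * (cmod (Z 0 \<omega>))\<^sup>2)"
    proof (intro AE_I2)
      fix \<omega>
      have "(cmod (Z 0 \<omega> - (Z 0 \<omega> - Zinf \<omega>)))\<^sup>2 \<le> 2 * (cmod (Z 0 \<omega>))\<^sup>2 + 2 * (cmod (Z 0 \<omega> - Zinf \<omega>))\<^sup>2"
        by (rule dif2)
      then show "norm ((cmod (Zinf \<omega>))\<^sup>2) \<le> norm (2 * (cmod (Z 0 \<omega> - Zinf \<omega>))\<^sup>2 + 2 * (cmod (Z 0 \<omega>))\<^sup>2)"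
        by simp
    qed
  qed
  show ?thesis unfolding conv_as_L2_def using Zinfm Zinf2 AElim Zdi Llim by blast
qed


context bmain begin

lemma Mnj2: "integrable Pr (\<lambda>\<omega>. (cmod (Mnj X alj R j f n \<omega>))\<^sup>2)"
proof (induction n)
  case 0
  have "Gen 0 = {[]}" by (auto simp: Gen_def)
  then have "(cmod (Mnj X alj R j f 0 \<omega>))\<^sup>2 = V (X [] \<omega>)" for \<omega>
    by (simp add: Mnj_eq V_def cmod_power2 hr_def hi_def)
  then show ?case using IL[OF VF] by simp
next
  case (Suc n)
  show ?case
  proof (rule Bochner_Integration.integrable_bound[where f="\<lambda>\<omega>. 2 * (cmod (Mnj X alj R j f n \<omega>))\<^sup>2 + 2 * (cmod (Dn n \<omega>))\<^sup>2"])
    show "integrable Pr (\<lambda>\<omega>. 2 * (cmod (Mnj X alj R j f n \<omega>))\<^sup>2 + 2 * (cmod (Dn n \<omega>))\<^sup>2)"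
      using Suc.IH Dsq_int[of n] by auto
    show "(\<lambda>\<omega>. (cmod (Mnj X alj R j f (Suc n) \<omega>))\<^sup>2) \<in> borel_measurable Pr"
      using borel_measurable_integrable[OF Mnj_int] by measurable
    show "AE \<omega> in Pr. norm ((cmod (Mnj X alj R j f (Suc n) \<omega>))\<^sup>2) \<le> norm (2 * (cmod (Mnj X alj R j f n \<omega>))\<^sup>2 + 2 * (cmod (Dn n \<omega>))\<^sup>2)"
    proof (intro AE_I2)
      fix \<omega>
      have "(cmod (Mnj X alj R j f n \<omega> - (- Dn n \<omega>)))\<^sup>2 \<le> 2 * (cmod (Mnj X alj R j f n \<omega>))\<^sup>2 + 2 * (cmod (- Dn n \<omega>))\<^sup>2"
        by (rule dif2)
      then show "norm ((cmod (Mnj X alj R j f (Suc n) \<omega>))\<^sup>2) \<le> norm (2 * (cmod (Mnj X alj R j f n \<omega>))\<^sup>2 + 2 * (cmod (Dn n \<omega>))\<^sup>2)"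
        by (simp add: Dn_def norm_minus_commute)
    qed
  qed
qed

lemma conv: "\<exists>Minf. conv_as_L2 Pr (Mnj X alj R j f) Minf"
proof -
  obtain C q where Cq: "0 \<le> C" "0 < q" "q < 1" "\<And>n. (\<integral>\<omega>. (cmod (Dn n \<omega>))\<^sup>2 \<partial>Pr) \<le> C * q ^ n"
    using Dbound by blast
  show ?thesis
  proof (rule L2conv[OF _ Mnj2 Cq(1-3)])
    show "Mnj X alj R j f n \<in> borel_measurable Pr" for n using borel_measurable_integrable[OF Mnj_int] .
    show "(\<integral>\<omega>. (cmod (Mnj X alj R j f (Suc n) \<omega> - Mnj X alj R j f n \<omega>))\<^sup>2 \<partial>Pr) \<le> C * q ^ n" for n
      using Cq(4)[of n] by (simp add: Dn_def)
  qed
qed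

end

theorem lemma3p9:
  fixes Pr :: "'w measure" and M :: "'s measure" and P :: "'s \<Rightarrow> ('s \<times> 's) measure"
    and \<nu> \<mu> :: "'s measure" and X :: "bool list \<Rightarrow> 'w \<Rightarrow> 's" and F :: "('s \<Rightarrow> real) set"
    and \<alpha> :: real and J :: "'j set" and alj :: "'j \<Rightarrow> complex"
    and R :: "'j \<Rightarrow> ('s \<Rightarrow> complex) \<Rightarrow> ('s \<Rightarrow> complex)" and \<beta> :: "nat \<Rightarrow> real"
  assumes "BMC Pr M P \<nu> X"
    and "assmF M P \<nu> F"
    and "assmF3 M P F \<mu> \<alpha> J alj R \<beta>"
    and "1 / sqrt 2 < \<alpha>" and "\<alpha> < 1"
    and "j \<in> J" and "f \<in> F"
  shows "cmartingale Pr (Hfilt Pr M X) (Mnj X alj R j f)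
         \<and> (\<exists>Minf. conv_as_L2 Pr (Mnj X alj R j f) Minf)"
proof -
  interpret bmain Pr M P \<nu> X F \<mu> \<alpha> J alj R \<beta> j f
    by unfold_locales (use assms in auto)
  show ?thesis using mart conv by blast
qed


end
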